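(* Let $n\ge1$ and let $\Sigma\subset\mathbb R^{n+1}$ be a closed set which is parabolic ADR with constant $M$ and which satisfies the (two-sided) corkscrew condition with constant $\gamma_0\in(0,1)$. Assume in addition that $\Sigma$ is parabolic uniformly rectifiable with constants $(M,\tilde M)$. Then $\Sigma$ satisfies the weak time-synchronized two cube condition with a constant $\gamma_1\in(0,1)$ depending only on $n,M,\gamma_0,\tilde M$.
   Context: Points of $\mathbb R^{n+1}$ are written $(X,t)$, $X\in\mathbb R^n$, $t\in\mathbb R$. Parabolic distance: $d_p((X,t),(Y,s))=|X-Y|+|t-s|^{1/2}$; diameters and distances are measured in this metric. Parabolic cube: $Q_r(X,t)=\{(Y,s): |y_i-x_i|<r,\ i=1,\dots,n,\ |t-s|<r^2\}$. $\mathcal H^{n+1}_p$ is the $(n+1)$-dimensional Hausdorff measure built with $d_p$-diameters; for closed $\Sigma$, $\sigma=\mathcal H^{n+1}_p$ restricted to $\Sigma$, $\Delta(X,t,r)=\Sigma\cap Q_r(X,t)$, $T_0$ and $T_1$ are the infimum and supremum of time coordinates of points of $\Sigma$. Parabolic ADR with constant $M$: $M^{-1}r^{n+1}\le\sigma(\Delta(X,t,r))\le Mr^{n+1}$ for $(X,t)\in\Sigma$, $T_0<t<T_1$, $0<r<\operatorname{diam}\Sigma$. Parabolic uniform rectifiability with constants $(M,\tilde M)$: $\Sigma$ is parabolic ADR with constant $M$ and, setting $\beta(Z,\tau,r)=\inf_P\big(r^{-n-1}\iint_{\Delta(Z,\tau,r)}(d_p((Y,s),P)/r)^2\,d\sigma(Y,s)\big)^{1/2}$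 (infimum over $n$-dimensional planes $P$ containing a line parallel to the $t$-axis) and $d\nu(Z,\tau,r)=\beta^2(Z,\tau,r)\,d\sigma(Z,\tau)\,r^{-1}dr$, one has $\sup_{(X,t)\in\Sigma,\rho>0}\rho^{-n-1}\nu(\Delta(X,t,\rho)\times(0,\rho))\le\tilde M$. Corkscrew condition with constant $\gamma_0\in(0,1)$: for all $(X,t)\in\Sigma$ with $T_0<t<T_1$ and $0<r<\operatorname{diam}\Sigma$ there are parabolic cubes $Q_\rho(X_1,t_1),Q_\rho(X_2,t_2)\subset Q_r(X,t)$ with $\gamma_0r\le\rho<r$ such that $Q_\rho(X_i,t_i)\cap(\mathbb R^n\times(T_0,T_1))$, $i=1,2$, lie in different connected components of $\mathbb R^{n+1}\setminus\Sigma$. Weak time-synchronized two cube condition with constant $\gamma_1$: the same with $\gamma_1$ in place of $\gamma_0$ and additionally $t_1=t_2$. *)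

theory Defs
  imports "HOL-Analysis.Analysis"
begin

text \<open>Points of R^(n+1) are pairs (X,t) with X :: real^'n (n = CARD('n) >= 1) and t :: real.\<close>

type_synonym 'n ppoint = "(real ^ 'n) \<times> real"

definition pdist :: "'n::finite ppoint \<Rightarrow> 'n ppoint \<Rightarrow> real" where
  "pdist p q = norm (fst p - fst q) + sqrt \<bar>snd p - snd q\<bar>"

text \<open>Parabolic diameter (in the extended nonnegative reals; 0 for the empty set).\<close>
definition pdiam :: "'n::finite ppoint set \<Rightarrow> ennreal" where
  "pdiam A = (SUP p\<in>A. SUP q\<in>A. ennreal (pdist p q))"

definition pcube :: "real \<Rightarrow> 'n::finite ppoint \<Rightarrow> 'n ppoint set" where
  "pcube r p = {q. (\<forall>i. \<bar>fst q $ i - fst p $ i\<bar> < r) \<and> \<bar>snd p - snd q\<bar> < r\<^sup>2}"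

definition phaus_delta :: "nat \<Rightarrow> real \<Rightarrow> 'n::finite ppoint set \<Rightarrow> ennreal" where
  "phaus_delta s \<delta> A = (INF C\<in>{C :: nat \<Rightarrow> 'n ppoint set.
       A \<subseteq> (\<Union>i. C i) \<and> (\<forall>i. pdiam (C i) \<le> ennreal \<delta>)}. (\<Sum>i. pdiam (C i) ^ s))"

definition phaus :: "nat \<Rightarrow> 'n::finite ppoint set \<Rightarrow> ennreal" where
  "phaus s A = (SUP \<delta>\<in>{0<..}. phaus_delta s \<delta> A)"

definition psigma :: "'n::finite ppoint set \<Rightarrow> 'n ppoint measure" where
  "psigma S = measure_of UNIV (sets borel) (\<lambda>A. phaus (CARD('n) + 1) (A \<inter> S))"

definition T0 :: "'n::finite ppoint set \<Rightarrow> ereal" where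
  "T0 S = Inf ((\<lambda>p. ereal (snd p)) ` S)"

definition T1 :: "'n::finite ppoint set \<Rightarrow> ereal" where
  "T1 S = Sup ((\<lambda>p. ereal (snd p)) ` S)"

definition in_time_range :: "'n::finite ppoint set \<Rightarrow> real \<Rightarrow> bool" where
  "in_time_range S t \<longleftrightarrow> T0 S < ereal t \<and> ereal t < T1 S"

definition parabolic_ADR :: "real \<Rightarrow> 'n::finite ppoint set \<Rightarrow> bool" where
  "parabolic_ADR M S \<longleftrightarrow>
     (\<forall>p\<in>S. \<forall>r. in_time_range S (snd p) \<and> 0 < r \<and> ennreal r < pdiam S \<longrightarrow>
        ennreal (r ^ (CARD('n) + 1) / M) \<le> phaus (CARD('n) + 1) (S \<inter> pcube r p) \<and>
        phaus (CARD('n) + 1) (S \<inter> pcube r p) \<le> ennreal (M * r ^ (CARD('n) + 1)))"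

definition time_planes :: "'n::finite ppoint set set" where
  "time_planes = {P. affine P \<and> P \<noteq> {} \<and> aff_dim P = int CARD('n) \<and>
                     (\<forall>q\<in>P. \<forall>c::real. (fst q, snd q + c) \<in> P)}"

definition pdist_set :: "'n::finite ppoint \<Rightarrow> 'n ppoint set \<Rightarrow> real" where
  "pdist_set q P = Inf (pdist q ` P)"

definition beta_sq :: "'n::finite ppoint set \<Rightarrow> 'n ppoint \<Rightarrow> real \<Rightarrow> ennreal" where
  "beta_sq S z r = (INF P\<in>time_planes.
      ennreal (1 / r ^ (CARD('n) + 1)) *
      (\<integral>\<^sup>+ q\<in>(S \<inter> pcube r z). ennreal ((pdist_set q P / r)\<^sup>2) \<partial>psigma S))"

text \<open>nu(Delta(X,t,rho) x (0,rho)) for d nu = beta^2 d sigma r^{-1} dr.\<close>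
definition nu_box :: "'n::finite ppoint set \<Rightarrow> 'n ppoint \<Rightarrow> real \<Rightarrow> ennreal" where
  "nu_box S p \<rho> = (\<integral>\<^sup>+ z\<in>(S \<inter> pcube \<rho> p).
       (\<integral>\<^sup>+ r\<in>{0<..<\<rho>}. beta_sq S z r * ennreal (1 / r) \<partial>lborel) \<partial>psigma S)"

definition parabolic_UR :: "real \<Rightarrow> real \<Rightarrow> 'n::finite ppoint set \<Rightarrow> bool" where
  "parabolic_UR M Mt S \<longleftrightarrow> parabolic_ADR M S \<and>
     (\<forall>p\<in>S. \<forall>\<rho>>0. nu_box S p \<rho> \<le> ennreal (Mt * \<rho> ^ (CARD('n) + 1)))"

definition two_cube :: "bool \<Rightarrow> real \<Rightarrow> 'n::finite ppoint set \<Rightarrow> bool" where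
  "two_cube sync \<gamma> S \<longleftrightarrow>
     (\<forall>p\<in>S. \<forall>r. in_time_range S (snd p) \<and> 0 < r \<and> ennreal r < pdiam S \<longrightarrow>
        (\<exists>\<rho> p1 p2. \<gamma> * r \<le> \<rho> \<and> \<rho> < r \<and>
           pcube \<rho> p1 \<subseteq> pcube r p \<and> pcube \<rho> p2 \<subseteq> pcube r p \<and>
           (sync \<longrightarrow> snd p1 = snd p2) \<and>
           (\<exists>U1 U2. U1 \<in> components (- S) \<and> U2 \<in> components (- S) \<and> U1 \<noteq> U2 \<and>
              pcube \<rho> p1 \<inter> {q. in_time_range S (snd q)} \<subseteq> U1 \<and>
              pcube \<rho> p2 \<inter> {q. in_time_range S (snd q)} \<subseteq> U2)))"

definition corkscrew :: "real \<Rightarrow> 'n::finite ppoint set \<Rightarrow> bool" where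
  "corkscrew \<gamma> S \<longleftrightarrow> two_cube False \<gamma> S"

definition weak_ts_two_cube :: "real \<Rightarrow> 'n::finite ppoint set \<Rightarrow> bool" where
  "weak_ts_two_cube \<gamma> S \<longleftrightarrow> two_cube True \<gamma> S"

end

theory Submission
  imports Defs
begin

lemma pdiam_empty[simp]: "pdiam {} = 0"
  by (simp add: pdiam_def bot_ennreal)

lemma pdiam_mono: "A \<subseteq> B \<Longrightarrow> pdiam A \<le> pdiam B"
  unfolding pdiam_def by (intro SUP_subset_mono) auto

lemma pdist_le_pdiam: "p \<in> A \<Longrightarrow> q \<in> A \<Longrightarrow> ennreal (pdist p q) \<le> pdiam A"
  unfolding pdiam_def
  by (rule SUP_upper2[of p]) (auto intro: SUP_upper)

lemma pdist_sym: "pdist p q = pdist q p"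
  unfolding pdist_def by (simp add: norm_minus_commute abs_minus_commute)

lemma pdist_nonneg: "0 \<le> pdist p q"
  unfolding pdist_def by simp

lemma sqrt_abs_triangle: "sqrt \<bar>a - c\<bar> \<le> sqrt \<bar>a - b\<bar> + sqrt \<bar>b - (c::real)\<bar>"
proof -
  have "\<bar>a - c\<bar> \<le> \<bar>a - b\<bar> + \<bar>b - c\<bar>" by simp
  also have "\<dots> \<le> (sqrt \<bar>a - b\<bar> + sqrt \<bar>b - c\<bar>)\<^sup>2"
    by (simp add: power2_sum)
  finally show ?thesis
    by (simp add: real_le_lsqrt)
qed

lemma pdist_triangle: "pdist p r \<le> pdist p q + pdist q r"
proof -
  have "norm (fst p - fst r) \<le> norm (fst p - fst q) + norm (fst q - fst r)"
    using norm_triangle_ineq[of "fst p - fst q" "fst q - fst r"] by simp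
  moreover have "sqrt \<bar>snd p - snd r\<bar> \<le> sqrt \<bar>snd p - snd q\<bar> + sqrt \<bar>snd q - snd r\<bar>"
    by (rule sqrt_abs_triangle)
  ultimately show ?thesis unfolding pdist_def by linarith
qed


lemma phaus_delta_mono: "A \<subseteq> B \<Longrightarrow> phaus_delta s d A \<le> phaus_delta s d B"
  unfolding phaus_delta_def by (intro INF_superset_mono) auto

lemma phaus_mono: "A \<subseteq> B \<Longrightarrow> phaus s A \<le> phaus s B"
  unfolding phaus_def by (intro SUP_mono) (auto intro: phaus_delta_mono)

lemma phaus_delta_empty:
  fixes s :: nat and d :: real
  assumes s: "0 < s"
  shows "phaus_delta s d ({} :: 'n::finite ppoint set) = 0"
proof -
  have "phaus_delta s d ({} :: 'n::finite ppoint set) \<le> (\<Sum>i::nat. pdiam ({} :: 'n::finite ppoint set) ^ s)"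
    unfolding phaus_delta_def by (rule INF_lower2[of "\<lambda>_. {}"]) auto
  also have "\<dots> = 0" using s by (simp add: zero_power)
  finally show ?thesis by simp
qed

lemma phaus_empty: "0 < s \<Longrightarrow> phaus s {} = 0"
  unfolding phaus_def by (simp add: phaus_delta_empty)

lemma phaus_delta_le_phaus: "0 < d \<Longrightarrow> phaus_delta s d A \<le> phaus s A"
  unfolding phaus_def by (rule SUP_upper) auto

lemma phaus_delta_subadd:
  fixes A :: "nat \<Rightarrow> 'n::finite ppoint set"
  shows "phaus_delta s d (\<Union>i. A i) \<le> (\<Sum>n. phaus_delta s d (A n))"
proof (rule ennreal_le_epsilon)
  fix e :: real assume e: "0 < e" "(\<Sum>n. phaus_delta s d (A n)) < top"
  let ?O = "phaus_delta s d"
  from e have *: "\<And>n. ?O (A n) < ?O (A n) + e * (1/2)^Suc n"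
    by (auto simp add: less_top dest!: ennreal_suminf_lessD)
  have "\<exists>B. (A n \<subseteq> (\<Union>i. B i) \<and> (\<forall>i. pdiam (B i) \<le> ennreal d)) \<and> (\<Sum>i. pdiam (B i) ^ s) \<le> ?O (A n) + e * (1/2)^(Suc n)" for n
  proof -
    from *[of n] obtain B where "B \<in> {C :: nat \<Rightarrow> 'n ppoint set.
       A n \<subseteq> (\<Union>i. C i) \<and> (\<forall>i. pdiam (C i) \<le> ennreal d)}"
      "(\<Sum>i. pdiam (B i) ^ s) < ?O (A n) + e * (1/2)^Suc n"
      unfolding phaus_delta_def[of s d "A n"] INF_less_iff by blast
    then show ?thesis by (intro exI[of _ B]) auto
  qed
  then obtain B where sbB: "\<And>n. A n \<subseteq> (\<Union>i. B n i)" and Bd: "\<And>n i. pdiam (B n i) \<le> ennreal d"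
      and Ble: "\<And>n. (\<Sum>i. pdiam (B n i) ^ s) \<le> ?O (A n) + e * (1/2)^(Suc n)"
    by metis
  define C where "C = case_prod B o prod_decode"
  have A_C: "(\<Union>i. A i) \<subseteq> (\<Union>i. C i)"
    using sbB by (auto simp add: C_def subset_eq) (metis prod.case prod_encode_inverse)
  have "?O (\<Union>i. A i) \<le> (\<Sum>i. pdiam (C i) ^ s)"
    unfolding phaus_delta_def using A_C Bd
    by (intro INF_lower) (auto simp: C_def split: prod.splits)
  also have "\<dots> = (\<Sum>n. \<Sum>i. pdiam (B n i) ^ s)"
    unfolding C_def comp_def by (intro suminf_ennreal_2dimen) auto
  also have "\<dots> \<le> (\<Sum>n. ?O (A n) + e * (1/2) ^ Suc n)"
    by (intro suminf_le allI Ble) auto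
  also have "... = (\<Sum>n. ?O (A n)) + (\<Sum>n. ennreal e * ennreal ((1/2) ^ Suc n))"
    using \<open>0 < e\<close> by (subst suminf_add[symmetric])
                     (auto simp del: ennreal_suminf_cmult simp add: ennreal_mult[symmetric])
  also have "\<dots> = (\<Sum>n. ?O (A n)) + e"
    unfolding ennreal_suminf_cmult
    by (subst suminf_ennreal_eq[OF zero_le_power power_half_series]) auto
  finally show "?O (\<Union>i. A i) \<le> (\<Sum>n. ?O (A n)) + e" .
qed

lemma phaus_subadd:
  fixes A :: "nat \<Rightarrow> 'n::finite ppoint set"
  shows "phaus s (\<Union>i. A i) \<le> (\<Sum>n. phaus s (A n))"
  unfolding phaus_def[of s "\<Union>i. A i"]
proof (rule SUP_least)
  fix d :: real assume d: "d \<in> {0<..}"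
  have "phaus_delta s d (\<Union>i. A i) \<le> (\<Sum>n. phaus_delta s d (A n))" by (rule phaus_delta_subadd)
  also have "\<dots> \<le> (\<Sum>n. phaus s (A n))"
    using d by (intro suminf_le allI phaus_delta_le_phaus) auto
  finally show "phaus_delta s d (\<Union>i. A i) \<le> (\<Sum>n. phaus s (A n))" .
qed

lemma phaus_Un_le:
  assumes "0 < s"
  shows "phaus s (A \<union> B) \<le> phaus s A + phaus s B"
proof -
  define F where "F = (\<lambda>i::nat. if i = 0 then A else if i = 1 then B else {})"
  have "A \<union> B = (\<Union>i. F i)" unfolding F_def by (auto split: if_splits)
  then have "phaus s (A \<union> B) \<le> (\<Sum>n. phaus s (F n))" using phaus_subadd[of s F] by simp
  also have "(\<Sum>n. phaus s (F n)) = (\<Sum>n<2. phaus s (F n))"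
    by (rule suminf_finite) (auto simp: F_def phaus_empty assms)
  also have "\<dots> = phaus s A + phaus s B" by (simp add: F_def numeral_2_eq_2)
  finally show ?thesis .
qed

definition psep :: "'n::finite ppoint set \<Rightarrow> 'n ppoint set \<Rightarrow> bool" where
  "psep A B \<longleftrightarrow> (\<exists>e>0. \<forall>a\<in>A. \<forall>b\<in>B. e \<le> pdist a b)"

lemma phaus_delta_sep:
  fixes A B :: "'n::finite ppoint set"
  assumes "0 < s" "\<forall>a\<in>A. \<forall>b\<in>B. d < pdist a b" "0 \<le> d"
  shows "phaus_delta s d A + phaus_delta s d B \<le> phaus_delta s d (A \<union> B)"
  unfolding phaus_delta_def[of s d "A \<union> B"]
proof (rule INF_greatest)
  fix C :: "nat \<Rightarrow> 'n ppoint set"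
  assume C: "C \<in> {C. A \<union> B \<subseteq> (\<Union>i. C i) \<and> (\<forall>i. pdiam (C i) \<le> ennreal d)}"
  have "phaus_delta s d A \<le> (\<Sum>i. pdiam (C i \<inter> A) ^ s)"
    unfolding phaus_delta_def using C
    by (intro INF_lower) (auto intro: order_trans[OF pdiam_mono])
  moreover have "phaus_delta s d B \<le> (\<Sum>i. pdiam (C i \<inter> B) ^ s)"
    unfolding phaus_delta_def using C
    by (intro INF_lower) (auto intro: order_trans[OF pdiam_mono])
  moreover have "pdiam (C i \<inter> A) ^ s + pdiam (C i \<inter> B) ^ s \<le> pdiam (C i) ^ s" for i
  proof (cases "C i \<inter> A = {} \<or> C i \<inter> B = {}")
    case True
    then show ?thesis using \<open>0 < s\<close>
      by (auto simp: zero_power intro!: power_mono pdiam_mono)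
  next
    case False
    then obtain a b where ab: "a \<in> C i" "a \<in> A" "b \<in> C i" "b \<in> B" by blast
    then have "ennreal (pdist a b) \<le> ennreal d"
      using C pdist_le_pdiam[of a "C i" b] by (auto intro: order_trans)
    moreover have "d < pdist a b" using assms ab by auto
    ultimately have False
      using pdist_nonneg[of a b] assms(3) by simp
    then show ?thesis ..
  qed
  ultimately show "phaus_delta s d A + phaus_delta s d B \<le> (\<Sum>i. pdiam (C i) ^ s)"
  proof -
    assume a1: "phaus_delta s d A \<le> (\<Sum>i. pdiam (C i \<inter> A) ^ s)"
      and a2: "phaus_delta s d B \<le> (\<Sum>i. pdiam (C i \<inter> B) ^ s)"
      and a3: "\<And>i. pdiam (C i \<inter> A) ^ s + pdiam (C i \<inter> B) ^ s \<le> pdiam (C i) ^ s"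
    have "phaus_delta s d A + phaus_delta s d B \<le> (\<Sum>i. pdiam (C i \<inter> A) ^ s) + (\<Sum>i. pdiam (C i \<inter> B) ^ s)"
      using a1 a2 by (rule add_mono)
    also have "\<dots> = (\<Sum>i. pdiam (C i \<inter> A) ^ s + pdiam (C i \<inter> B) ^ s)"
      by (rule suminf_add) auto
    also have "\<dots> \<le> (\<Sum>i. pdiam (C i) ^ s)"
      by (rule suminf_le) (auto intro: a3)
    finally show ?thesis .
  qed
qed

lemma phaus_delta_antimono: "d \<le> d' \<Longrightarrow> phaus_delta s d' A \<le> phaus_delta s d A"
  unfolding phaus_delta_def
  by (intro INF_superset_mono) (auto intro: order_trans ennreal_leI)

lemma phaus_sep:
  assumes "0 < s" "psep A B"
  shows "phaus s (A \<union> B) = phaus s A + phaus s B"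
proof (rule antisym)
  show "phaus s (A \<union> B) \<le> phaus s A + phaus s B"
    using phaus_Un_le[OF assms(1)] .
  obtain e where e: "e > 0" "\<forall>a\<in>A. \<forall>b\<in>B. e \<le> pdist a b" using assms unfolding psep_def by auto
  have key: "phaus_delta s d1 A + phaus_delta s d2 B \<le> phaus s (A \<union> B)" if "d1 > 0" "d2 > 0" for d1 d2
  proof -
    define d where "d = min (e/2) (min d1 d2)"
    have d: "d > 0" "d \<le> d1" "d \<le> d2" "d < e" using that e by (auto simp: d_def)
    have "phaus_delta s d1 A + phaus_delta s d2 B \<le> phaus_delta s d A + phaus_delta s d B"
      using d by (intro add_mono phaus_delta_antimono)
    also have "\<dots> \<le> phaus_delta s d (A \<union> B)"
      using d e by (intro phaus_delta_sep assms(1)) force+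
    also have "\<dots> \<le> phaus s (A \<union> B)" using d(1) by (rule phaus_delta_le_phaus)
    finally show ?thesis .
  qed
  show "phaus s A + phaus s B \<le> phaus s (A \<union> B)"
  proof -
    have ne: "{0::real<..} \<noteq> {}" by auto
    have "phaus s A + phaus s B = (SUP d1\<in>{0<..}. phaus_delta s d1 A + phaus s B)"
      unfolding phaus_def[of s A] by (rule ennreal_SUP_add_left[OF ne, symmetric])
    also have "\<dots> \<le> phaus s (A \<union> B)"
    proof (rule SUP_least)
      fix d1 :: real assume d1: "d1 \<in> {0<..}"
      have "phaus_delta s d1 A + phaus s B = (SUP d2\<in>{0<..}. phaus_delta s d1 A + phaus_delta s d2 B)"
        unfolding phaus_def[of s B] by (rule ennreal_SUP_add_right[OF ne])
      also have "\<dots> \<le> phaus s (A \<union> B)"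
        by (rule SUP_least) (use d1 key in auto)
      finally show "phaus_delta s d1 A + phaus s B \<le> phaus s (A \<union> B)" .
    qed
    finally show ?thesis .
  qed
qed

lemma sum_even_odd_ennreal:
  fixes f :: "nat \<Rightarrow> ennreal"
  shows "(\<Sum>i<2*m. f i) = (\<Sum>i<m. f (2*i)) + (\<Sum>i<m. f (2*i+1))"
  by (induction m) (simp_all add: ac_simps)

lemma pdist_small_dist:
  assumes "pdist x q < e" "e \<le> 1"
  shows "dist x q < 2 * e"
proof -
  obtain X t where x: "x = (X,t)" by (cases x)
  obtain Y s where q: "q = (Y,s)" by (cases q)
  have n: "norm (X - Y) < e" and sq: "sqrt \<bar>t - s\<bar> < e"
    using assms(1) unfolding pdist_def x q by (simp_all add: add_pos_nonneg)
       (smt (verit) norm_ge_zero real_sqrt_ge_zero)+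
  have "\<bar>t - s\<bar> = (sqrt \<bar>t - s\<bar>)\<^sup>2" by simp
  also have "\<dots> < e\<^sup>2" using sq by (intro power_strict_mono) auto
  also have "\<dots> \<le> e" using assms(2) sq
    by (smt (verit, best) mult_left_le power2_eq_square real_sqrt_ge_zero)
  finally have ts: "\<bar>t - s\<bar> < e" .
  have "dist x q = sqrt ((dist X Y)\<^sup>2 + (dist t s)\<^sup>2)" unfolding x q by (rule dist_Pair_Pair)
  also have "\<dots> \<le> \<bar>dist X Y\<bar> + \<bar>dist t s\<bar>" by (rule sqrt_sum_squares_le_sum_abs)
  also have "\<dots> < 2 * e" using n ts by (simp add: dist_norm dist_real_def)
  finally show ?thesis .
qed

lemma closed_pdist_gap:
  fixes F :: "'n::finite ppoint set"
  assumes "closed F" "x \<notin> F"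
  shows "\<exists>k::nat. \<forall>q\<in>F. 1 / real (Suc k) \<le> pdist x q"
proof -
  have "open (- F)" using assms(1) by auto
  then obtain e0 where e0: "e0 > 0" "ball x e0 \<subseteq> - F"
    using assms(2) open_contains_ball by blast
  define e where "e = min 1 (e0/2)"
  have e: "e > 0" "e \<le> 1" "2 * e \<le> e0" using e0 by (auto simp: e_def)
  obtain k :: nat where k: "inverse (real (Suc k)) < e" using e(1) reals_Archimedean by blast
  have "1 / real (Suc k) \<le> pdist x q" if "q \<in> F" for q
  proof (rule ccontr)
    assume "\<not> 1 / real (Suc k) \<le> pdist x q"
    then have "pdist x q < 1 / real (Suc k)" by simp
    then have "pdist x q < e" using k by (simp add: inverse_eq_divide)
    then have "dist x q < e0" using pdist_small_dist[of x q e] e by linarith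
    then show False using e0 that by auto
  qed
  then show ?thesis by blast
qed

lemma carath_closed:
  fixes nu :: "'n::finite ppoint set \<Rightarrow> ennreal"
  assumes mono: "\<And>A B. A \<subseteq> B \<Longrightarrow> nu A \<le> nu B"
    and sub: "\<And>A::nat \<Rightarrow> 'n ppoint set. nu (\<Union>i. A i) \<le> (\<Sum>i. nu (A i))"
    and emp: "nu {} = 0"
    and sep: "\<And>A B. psep A B \<Longrightarrow> nu (A \<union> B) = nu A + nu B"
    and F: "closed F"
  shows "nu (X \<inter> F) + nu (X - F) \<le> nu X"
proof (cases "nu X = top")
  case True then show ?thesis by simp
next
  case fin: False
  define D where "D = X - F"
  define Dk where "Dk k = {x \<in> D. \<forall>q\<in>F. 1 / real (Suc k) \<le> pdist x q}" for k :: nat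
  have Dk_mono: "Dk k \<subseteq> Dk m" if "k \<le> m" for k m
  proof
    fix x assume "x \<in> Dk k"
    moreover have "1 / real (Suc m) \<le> 1 / real (Suc k)" using that by (simp add: frac_le)
    ultimately show "x \<in> Dk m" unfolding Dk_def by force
  qed
  have DkD: "Dk k \<subseteq> D" for k unfolding Dk_def by auto
  have Dall: "\<exists>k. x \<in> Dk k" if "x \<in> D" for x
    using closed_pdist_gap[OF F, of x] that unfolding Dk_def D_def by auto
  have step1: "nu (X \<inter> F) + nu (Dk k) \<le> nu X" for k
  proof -
    have "psep (X \<inter> F) (Dk k)"
      unfolding psep_def Dk_def
      by (rule exI[of _ "1 / real (Suc k)"]) (auto simp: pdist_sym)
    then have "nu (X \<inter> F) + nu (Dk k) = nu ((X \<inter> F) \<union> Dk k)" by (simp add: sep)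
    also have "\<dots> \<le> nu X" using DkD[of k] by (intro mono) (auto simp: D_def)
    finally show ?thesis .
  qed
  define R where "R j = Dk (Suc j) - Dk j" for j
  have Rsep: "psep (Dk a) (R j)" if "Suc a \<le> j" for a j
  proof -
    have "pdist y x \<ge> 1 / real (Suc a) - 1 / real (Suc (Suc a))" if "y \<in> Dk a" "x \<in> R j" for x y
    proof -
      have "x \<in> D" "x \<notin> Dk j" using \<open>x \<in> R j\<close> DkD unfolding R_def by auto
      then have "x \<notin> Dk (Suc a)" using Dk_mono[OF \<open>Suc a \<le> j\<close>] by auto
      then obtain q where q: "q \<in> F" "pdist x q < 1 / real (Suc (Suc a))"
        using \<open>x \<in> D\<close> unfolding Dk_def by auto
      have "1 / real (Suc a) \<le> pdist y q" using \<open>y \<in> Dk a\<close> q(1) unfolding Dk_def by auto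
      moreover have "pdist y q \<le> pdist y x + pdist x q" by (rule pdist_triangle)
      ultimately show ?thesis using q(2) by linarith
    qed
    moreover have "1 / real (Suc a) - 1 / real (Suc (Suc a)) > 0" by (simp add: frac_less2)
    ultimately show ?thesis unfolding psep_def by blast
  qed
  have gsum: "nu (\<Union>i<m. R (g i)) = (\<Sum>i<m. nu (R (g i)))"
    if g: "\<And>i. g i + 2 \<le> g (Suc i)" for g :: "nat \<Rightarrow> nat" and m
  proof (induction m)
    case 0 then show ?case by (simp add: emp)
  next
    case (Suc m)
    have gle: "g i + 2 \<le> g m" if "i < m" for i
      using that
    proof (induction m)
      case 0 then show ?case by simp
    next
      case (Suc m)
      then show ?case using g[of m] by (cases "i = m") auto
    qed
    have "psep (\<Union>i<m. R (g i)) (R (g m))"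
    proof (cases m)
      case 0 then show ?thesis unfolding psep_def by (auto intro: exI[of _ 1])
    next
      case (Suc m')
      have "(\<Union>i<m. R (g i)) \<subseteq> Dk (g m - 1)"
      proof
        fix x assume "x \<in> (\<Union>i<m. R (g i))"
        then obtain i where i: "i < m" "x \<in> R (g i)" by auto
        then have "x \<in> Dk (Suc (g i))" unfolding R_def by auto
        moreover have "Suc (g i) \<le> g m - 1" using gle[OF i(1)] by linarith
        ultimately show "x \<in> Dk (g m - 1)" using Dk_mono by blast
      qed
      moreover have "psep (Dk (g m - 1)) (R (g m))"
        using gle[of 0] Suc by (intro Rsep) auto
      ultimately show ?thesis unfolding psep_def by blast
    qed
    then have "nu ((\<Union>i<m. R (g i)) \<union> R (g m)) = nu (\<Union>i<m. R (g i)) + nu (R (g m))"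
      by (rule sep)
    moreover have "(\<Union>i<Suc m. R (g i)) = (\<Union>i<m. R (g i)) \<union> R (g m)"
      by (auto simp: lessThan_Suc)
    ultimately show ?case using Suc.IH by simp
  qed
  have RD: "R j \<subseteq> D" for j using DkD unfolding R_def by auto
  have gbound: "(\<Sum>i<m. nu (R (g i))) \<le> nu X"
    if g: "\<And>i. g i + 2 \<le> g (Suc i)" for g :: "nat \<Rightarrow> nat" and m
  proof -
    have "(\<Sum>i<m. nu (R (g i))) = nu (\<Union>i<m. R (g i))" using gsum[of g m] g by presburger
    also have "\<dots> \<le> nu X" using RD by (intro mono) (auto simp: D_def)
    finally show ?thesis .
  qed
  have ev: "(\<Sum>i<m. nu (R (2*i))) \<le> nu X" for m
    using gbound[of "\<lambda>i. 2*i"] by simp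
  have od: "(\<Sum>i<m. nu (R (2*i+1))) \<le> nu X" for m
    using gbound[of "\<lambda>i. 2*i+1"] by simp
  have partial: "(\<Sum>j<n. nu (R j)) \<le> 2 * nu X" for n
  proof -
    have "(\<Sum>j<n. nu (R j)) \<le> (\<Sum>j<2*n. nu (R j))" by (intro sum_mono2) auto
    also have "\<dots> = (\<Sum>i<n. nu (R (2*i))) + (\<Sum>i<n. nu (R (2*i+1)))"
      by (rule sum_even_odd_ennreal)
    also have "\<dots> \<le> nu X + nu X" by (intro add_mono ev od)
    finally show ?thesis by (simp add: mult_2)
  qed
  have Rfin: "(\<Sum>j. nu (R j)) \<noteq> top"
  proof -
    have "(\<Sum>j. nu (R j)) \<le> 2 * nu X"
      unfolding suminf_eq_SUP by (intro SUP_least partial)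
    moreover have "2 * nu X < top" using fin by (simp add: ennreal_mult_less_top top.not_eq_extremum)
    ultimately show ?thesis by (metis top.not_eq_extremum leD)
  qed
  define rr where "rr j = enn2real (nu (R j))" for j
  have Rj_fin: "nu (R j) \<noteq> top" for j
    using Rfin ennreal_suminf_lessD top.not_eq_extremum by (metis (no_types, lifting) ennreal_suminf_lessD)
  have rr: "nu (R j) = ennreal (rr j)" for j
    unfolding rr_def using Rj_fin by (simp add: ennreal_enn2real_if)
  have rr0: "0 \<le> rr j" for j unfolding rr_def by simp
  have rrs: "summable rr"
    using Rfin rr rr0 by (intro summable_suminf_not_top) auto
  have tail: "\<exists>k. (\<Sum>j. nu (R (j + k))) < ennreal e" if epos: "e > 0" for e
  proof -
    obtain N where N: "\<And>n. n \<ge> N \<Longrightarrow> norm (\<Sum>i. rr (i + n)) < e"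
      using suminf_exist_split[OF epos rrs] by blast
    have sN: "summable (\<lambda>i. rr (i + N))" using rrs by (simp add: summable_iff_shift)
    have "(\<Sum>j. nu (R (j + N))) = ennreal (\<Sum>j. rr (j + N))"
      unfolding rr using sN rr0 by (intro suminf_ennreal2) auto
    moreover have "(\<Sum>j. rr (j + N)) < e" using N[of N] by auto
    ultimately show ?thesis using epos by (intro exI[of _ N]) (simp add: ennreal_lessI)
  qed
  have cover: "nu D \<le> nu (Dk k) + (\<Sum>j. nu (R (j + k)))" for k
  proof -
    define E where "E i = (if i = 0 then Dk k else R (i - 1 + k))" for i
    have "D \<subseteq> (\<Union>i. E i)"
    proof
      fix x assume x: "x \<in> D"
      define m where "m = (LEAST m. x \<in> Dk m)"
      have xm: "x \<in> Dk m" unfolding m_def using Dall[OF x] by (rule LeastI_ex)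
      show "x \<in> (\<Union>i. E i)"
      proof (cases "m \<le> k")
        case True then show ?thesis using Dk_mono[OF True] xm by (auto simp: E_def intro!: exI[of _ 0])
      next
        case False
        then obtain j where j: "m = Suc j" "k \<le> j" by (cases m) auto
        have "x \<notin> Dk j" using j not_less_Least[of j "\<lambda>m. x \<in> Dk m"] unfolding m_def by auto
        then have "x \<in> R j" using xm j unfolding R_def by auto
        then have "x \<in> E (Suc (j - k))" using j by (simp add: E_def)
        then show ?thesis by blast
      qed
    qed
    then have "nu D \<le> nu (\<Union>i. E i)" by (rule mono)
    also have "\<dots> \<le> (\<Sum>i. nu (E i))" by (rule sub)
    also have "\<dots> = (\<Sum>i. nu (E (i + 1))) + (\<Sum>i<1. nu (E i))"
      by (rule suminf_offset) auto
    also have "\<dots> = nu (Dk k) + (\<Sum>j. nu (R (j + k)))"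
      by (simp add: E_def add.commute)
    finally show ?thesis .
  qed
  show ?thesis
  proof (rule ennreal_le_epsilon)
    fix e :: real assume "0 < e"
    then obtain k where k: "(\<Sum>j. nu (R (j + k))) < ennreal e" using tail by blast
    have "nu (X \<inter> F) + nu (X - F) \<le> nu (X \<inter> F) + (nu (Dk k) + (\<Sum>j. nu (R (j + k))))"
      using cover[of k] unfolding D_def by (intro add_mono) auto
    also have "\<dots> = (nu (X \<inter> F) + nu (Dk k)) + (\<Sum>j. nu (R (j + k)))" by (simp add: ac_simps)
    also have "\<dots> \<le> nu X + ennreal e" using step1[of k] k by (intro add_mono) auto
    finally show "nu (X \<inter> F) + nu (X - F) \<le> nu X + ennreal e" .
  qed
qed

lemma psep_Int: "psep A B \<Longrightarrow> psep (A \<inter> S) (B \<inter> S)"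
  unfolding psep_def by blast

lemma nu_closed_lambda:
  fixes S :: "'n::finite ppoint set"
  defines "nu \<equiv> (\<lambda>A. phaus (CARD('n) + 1) (A \<inter> S))"
  assumes F: "closed F"
  shows "nu (X \<inter> F) + nu (X - F) = nu X"
proof (rule antisym)
  show "nu (X \<inter> F) + nu (X - F) \<le> nu X"
  proof (rule carath_closed[OF _ _ _ _ F])
    show "nu A \<le> nu B" if "A \<subseteq> B" for A B
      unfolding nu_def using that by (intro phaus_mono) auto
    show "nu (\<Union>i. A i) \<le> (\<Sum>i. nu (A i))" for A :: "nat \<Rightarrow> 'n ppoint set"
      unfolding nu_def using phaus_subadd[of _ "\<lambda>i. A i \<inter> S"] by (simp add: Int_UN_distrib2)
    show "nu {} = 0" unfolding nu_def by (simp add: phaus_empty)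
    show "nu (A \<union> B) = nu A + nu B" if "psep A B" for A B
      unfolding nu_def using phaus_sep[OF _ psep_Int[OF that, of S]] by (simp add: Int_Un_distrib2)
  qed
  have "nu X = phaus (CARD('n) + 1) ((X \<inter> F \<inter> S) \<union> ((X - F) \<inter> S))"
    unfolding nu_def by (rule arg_cong[where f="phaus _"]) auto
  also have "\<dots> \<le> nu (X \<inter> F) + nu (X - F)" unfolding nu_def by (rule phaus_Un_le) simp
  finally show "nu X \<le> nu (X \<inter> F) + nu (X - F)" .
qed

lemma psigma_ms:
  fixes S :: "'n::finite ppoint set"
  shows "measure_space UNIV (sets borel) (\<lambda>A. phaus (CARD('n) + 1) (A \<inter> S))"
proof -
  define nu where "nu = (\<lambda>A. phaus (CARD('n) + 1) (A \<inter> S))"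
  have oms: "outer_measure_space (Pow UNIV) nu"
    unfolding outer_measure_space_def positive_def increasing_def countably_subadditive_def nu_def
    using phaus_subadd[of _ "\<lambda>i. _ i \<inter> S"]
    by (auto simp: phaus_empty Int_UN_distrib2 intro: phaus_mono)
  interpret P: sigma_algebra "UNIV :: 'n ppoint set" "Pow UNIV" by (rule sigma_algebra_Pow)
  define L where "L = lambda_system UNIV (Pow UNIV) nu"
  have ms: "measure_space UNIV L nu" unfolding L_def by (rule P.caratheodory_lemma[OF oms])
  then interpret L: sigma_algebra "UNIV :: 'n ppoint set" L by (simp add: measure_space_def)
  have closedL: "F \<in> L" if "closed F" for F
    unfolding L_def P.lambda_system_eq using nu_closed_lambda[OF that, of _ S] by (auto simp: nu_def)
  have openL: "U \<in> L" if "open U" for U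
  proof -
    have "- U \<in> L" using that by (intro closedL) auto
    then have "UNIV - (- U) \<in> L" by (rule L.compl_sets)
    then show ?thesis by simp
  qed
  have "sets borel \<subseteq> L"
    unfolding sets_borel by (rule L.sigma_sets_subset) (auto intro: openL)
  then have "measure_space UNIV (sets borel) nu"
    using ms by (intro measure_down[OF ms]) (auto simp: sets_borel intro: sigma_algebra_sigma_sets)
  then show ?thesis unfolding nu_def .
qed

lemma sets_psigma[simp, measurable_cong]: "sets (psigma S) = sets borel"
  unfolding psigma_def using sets.sigma_sets_eq[of borel] by (simp add: sets_measure_of)

lemma emeasure_psigma:
  fixes S :: "'n::finite ppoint set"
  assumes "A \<in> sets borel"
  shows "emeasure (psigma S) A = phaus (CARD('n) + 1) (A \<inter> S)"
  unfolding psigma_def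
  using psigma_ms[of S] assms unfolding measure_space_def
  by (intro emeasure_measure_of_sigma) auto

lemma pcube_iff: "q \<in> pcube r p \<longleftrightarrow> (\<forall>i. \<bar>fst q $ i - fst p $ i\<bar> < r) \<and> \<bar>snd p - snd q\<bar> < r\<^sup>2"
  unfolding pcube_def by simp

lemma conv_abs:
  fixes a b c R u v :: real
  assumes "\<bar>a - c\<bar> < R" "\<bar>b - c\<bar> < R" "0 \<le> u" "0 \<le> v" "u + v = 1"
  shows "\<bar>u * a + v * b - c\<bar> < R"
proof -
  have e: "u * a + v * b - c = u * (a - c) + v * (b - c)" using assms(5) by algebra
  have "\<bar>u * (a - c) + v * (b - c)\<bar> \<le> u * \<bar>a - c\<bar> + v * \<bar>b - c\<bar>"
    using assms(3,4) abs_triangle_ineq[of "u * (a - c)" "v * (b - c)"] by (simp add: abs_mult)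
  also have "\<dots> < R"
  proof (cases "u = 0")
    case True then show ?thesis using assms by simp
  next
    case False
    then have "u * \<bar>a - c\<bar> < u * R" using assms by simp
    moreover have "v * \<bar>b - c\<bar> \<le> v * R" using assms by (simp add: mult_left_mono)
    moreover have "u * R + v * R = R" using assms(5) by (metis distrib_right mult_1)
    ultimately show ?thesis by linarith
  qed
  finally show ?thesis using e by simp
qed

lemma convex_pcube: "convex (pcube r p)"
proof (rule convexI)
  fix x y :: "'a::finite ppoint" and u v :: real
  assume x: "x \<in> pcube r p" and y: "y \<in> pcube r p" and uv: "0 \<le> u" "0 \<le> v" "u + v = 1"
  show "u *\<^sub>R x + v *\<^sub>R y \<in> pcube r p"
    unfolding pcube_iff
  proof (intro conjI allI)
    fix i
    show "\<bar>fst (u *\<^sub>R x + v *\<^sub>R y) $ i - fst p $ i\<bar> < r"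
      using conv_abs[of "fst x $ i" "fst p $ i" r "fst y $ i" u v] x y uv by (simp add: pcube_iff)
    show "\<bar>snd p - snd (u *\<^sub>R x + v *\<^sub>R y)\<bar> < r\<^sup>2"
      using conv_abs[of "snd x" "snd p" "r\<^sup>2" "snd y" u v] x y uv by (simp add: pcube_iff abs_minus_commute)
  qed
qed

lemma convex_W1: "convex (pcube r p \<inter> {q. c < a \<bullet> fst q - b})"
proof -
  have "{q. c < a \<bullet> fst q - b} = {q. inner (a, 0::real) q > c + b}"
    by (auto simp: inner_prod_def)
  then show ?thesis using convex_pcube convex_halfspace_gt by (metis convex_Int)
qed

lemma convex_W2: "convex (pcube r p \<inter> {q. a \<bullet> fst q - b < c})"
proof -
  have "{q. a \<bullet> fst q - b < c} = {q. inner (a, 0::real) q < c + b}"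
    by (auto simp: inner_prod_def)
  then show ?thesis using convex_pcube convex_halfspace_lt by (metis convex_Int)
qed

definition L1 :: "real^'n::finite \<Rightarrow> real" where "L1 a = (\<Sum>i\<in>UNIV. \<bar>a $ i\<bar>)"

lemma L1_ge_norm: "norm a \<le> L1 a"
  unfolding L1_def norm_vec_def using L2_set_le_sum[of UNIV "\<lambda>i. norm (a $ i)"] by simp

lemma L1_le_card: "norm a = 1 \<Longrightarrow> L1 a \<le> real CARD('n)" for a :: "real^'n::finite"
proof -
  assume "norm a = 1"
  then have "\<bar>a $ i\<bar> \<le> 1" for i using component_le_norm_cart[of a i] by simp
  then have "L1 a \<le> (\<Sum>i\<in>(UNIV::'n set). 1)" unfolding L1_def by (intro sum_mono) auto
  then show ?thesis by simp
qed

lemma L1_uminus[simp]: "L1 (- a) = L1 a" unfolding L1_def by simp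

lemma inner_bound_L1:
  fixes a v :: "real^'n::finite"
  assumes "\<And>i. \<bar>v $ i\<bar> \<le> R"
  shows "\<bar>a \<bullet> v\<bar> \<le> L1 a * R"
proof -
  have "\<bar>a \<bullet> v\<bar> = \<bar>\<Sum>i\<in>UNIV. a $ i * v $ i\<bar>" unfolding inner_vec_def by simp
  also have "\<dots> \<le> (\<Sum>i\<in>UNIV. \<bar>a $ i\<bar> * \<bar>v $ i\<bar>)" by (rule order_trans[OF sum_abs]) (simp add: abs_mult)
  also have "\<dots> \<le> (\<Sum>i\<in>UNIV. \<bar>a $ i\<bar> * R)" using assms by (intro sum_mono mult_left_mono) auto
  finally show ?thesis unfolding L1_def by (simp add: sum_distrib_right)
qed

definition sgv :: "real^'n::finite \<Rightarrow> real^'n" where "sgv a = (\<chi> i. sgn (a $ i))"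

lemma inner_sgv: "a \<bullet> (c *\<^sub>R sgv a) = c * L1 a"
  unfolding sgv_def L1_def inner_vec_def
  by (simp add: sum_distrib_left abs_sgn mult.left_commute)

lemma sgv_bound: "\<bar>(c *\<^sub>R sgv a) $ i\<bar> \<le> \<bar>c\<bar>"
  unfolding sgv_def by (simp add: abs_mult abs_sgn_eq)

lemma time_plane_normal:
  fixes P :: "'n::finite ppoint set"
  assumes "P \<in> time_planes"
  shows "\<exists>a b. norm a = 1 \<and> (\<forall>q\<in>P. a \<bullet> fst q = b)"
proof -
  have aff: "affine P" "P \<noteq> {}" "aff_dim P = int CARD('n)"
    and sh: "\<And>q c. q \<in> P \<Longrightarrow> (fst q, snd q + c) \<in> P"
    using assms unfolding time_planes_def by blast+
  have dimeq: "aff_dim P = int (DIM((real^'n) \<times> real) - 1)" using aff(3) by simp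
  have ex: "\<exists>c \<beta>. c \<noteq> 0 \<and> affine hull P = {x. c \<bullet> x = \<beta>}"
    by (rule iffD1[OF aff_dim_eq_hyperplane]) (rule dimeq)
  then obtain c \<beta> where c: "c \<noteq> 0" "affine hull P = {x. c \<bullet> x = \<beta>}"
    by auto
  then have P: "P = {x. c \<bullet> x = \<beta>}" using aff(1) affine_hull_eq[of P] by simp
  obtain q where q: "q \<in> P" using aff(2) by auto
  have e1: "c \<bullet> q = \<beta>" using q P by blast
  have e2: "c \<bullet> (fst q, snd q + 1) = \<beta>" using sh[OF q, of 1] P by blast
  have ct: "snd c = 0"
  proof -
    have "c \<bullet> (fst q, snd q + 1) = fst c \<bullet> fst q + snd c * (snd q + 1)" by (simp add: inner_prod_def)
    moreover have "c \<bullet> q = fst c \<bullet> fst q + snd c * snd q" by (simp add: inner_prod_def)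
    ultimately show ?thesis using e1 e2 by (simp add: algebra_simps)
  qed
  have cX: "fst c \<noteq> 0"
  proof
    assume "fst c = 0"
    then have "c = (0, 0)" using ct by (simp add: prod_eq_iff)
    then show False using c(1) by (simp add: zero_prod_def)
  qed
  define a where "a = fst c /\<^sub>R norm (fst c)"
  define b where "b = \<beta> / norm (fst c)"
  have "norm a = 1" using cX by (simp add: a_def)
  moreover have "a \<bullet> fst x = b" if "x \<in> P" for x
  proof -
    have "c \<bullet> x = \<beta>" using that P by blast
    then have "fst c \<bullet> fst x = \<beta>" using ct by (simp add: inner_prod_def)
    then show ?thesis using cX by (simp add: a_def b_def divide_inverse mult.commute)
  qed
  ultimately show ?thesis by blast
qed

lemma pdist_set_lower:
  fixes P :: "'n::finite ppoint set"
  assumes "P \<noteq> {}" "norm a = 1" "\<forall>y\<in>P. a \<bullet> fst y = b"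
  shows "\<bar>a \<bullet> fst q - b\<bar> \<le> pdist_set q P"
  unfolding pdist_set_def
proof (rule cInf_greatest)
  show "pdist q ` P \<noteq> {}" using assms(1) by auto
  fix d assume "d \<in> pdist q ` P"
  then obtain y where y: "y \<in> P" "d = pdist q y" by auto
  have "\<bar>a \<bullet> fst q - b\<bar> = \<bar>a \<bullet> (fst q - fst y)\<bar>" using assms(3) y(1) by (simp add: inner_diff_right)
  also have "\<dots> \<le> norm a * norm (fst q - fst y)" by (rule Cauchy_Schwarz_ineq2)
  also have "\<dots> \<le> pdist q y" using assms(2) by (simp add: pdist_def)
  finally show "\<bar>a \<bullet> fst q - b\<bar> \<le> d" using y by simp
qed

lemma inner_sgv1: "a \<bullet> sgv a = L1 a"
  using inner_sgv[of a 1] by simp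

lemma sgv_small: "0 < r \<Longrightarrow> \<bar>((r/2) *\<^sub>R sgv a) $ i\<bar> < r"
  using sgv_bound[of "r/2" a i] by simp

lemma half_cube:
  fixes S :: "'n::finite ppoint set" and a :: "real^'n"
  assumes a: "norm a = 1" and e: "0 < e" "0 < s" "8 * e * s < r" "r \<le> s / 2"
    and Q1: "pcube r p1 \<subseteq> pcube (s/2) z" and QU: "pcube r p1 \<subseteq> U"
    and W1: "pcube (s/2) z \<inter> {q. e * s < a \<bullet> fst q - b} \<subseteq> U"
    and W2: "pcube (s/2) z \<inter> {q. a \<bullet> fst q - b < - (e * s)} \<inter> U = {}"
  shows "pcube (r/4) (fst p1, snd z) \<subseteq> U"
proof
  have L: "1 \<le> L1 a" using L1_ge_norm[of a] a by simp
  have r0: "0 < r" using e by (smt (verit) mult_pos_pos)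
  define xm where "xm = (fst p1 - (r/2) *\<^sub>R sgv a, snd p1)"
  have xmQ: "xm \<in> pcube r p1"
    unfolding pcube_iff xm_def using sgv_small[OF r0, of a] r0 by (auto simp: abs_minus_commute)
  then have "xm \<in> U" "xm \<in> pcube (s/2) z" using QU Q1 by auto
  then have "\<not> (a \<bullet> fst xm - b < - (e * s))" using W2 by blast
  moreover have "a \<bullet> fst xm = a \<bullet> fst p1 - (r/2) * L1 a"
    unfolding xm_def by (simp add: inner_diff_right inner_sgv inner_sgv1)
  ultimately have c1: "a \<bullet> fst p1 - b \<ge> (r/2) * L1 a - e * s" by linarith
  fix q assume q: "q \<in> pcube (r/4) (fst p1, snd z)"
  then have qi: "\<And>i. \<bar>fst q $ i - fst p1 $ i\<bar> < r/4" and qt: "\<bar>snd z - snd q\<bar> < (r/4)\<^sup>2"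
    unfolding pcube_iff by auto
  have qi': "\<bar>fst q $ i - fst p1 $ i\<bar> < r" for i using qi[of i] r0 by linarith
  have "(fst q, snd p1) \<in> pcube r p1" unfolding pcube_iff using qi' r0 by auto
  then have "(fst q, snd p1) \<in> pcube (s/2) z" using Q1 by auto
  then have qs: "\<And>i. \<bar>fst q $ i - fst z $ i\<bar> < s/2" unfolding pcube_iff by auto
  have "(r/4)\<^sup>2 \<le> (s/2)\<^sup>2" using r0 e by (intro power_mono) auto
  then have "q \<in> pcube (s/2) z" unfolding pcube_iff using qs qt by auto
  moreover have "e * s < a \<bullet> fst q - b"
  proof -
    have "\<bar>a \<bullet> (fst q - fst p1)\<bar> \<le> L1 a * (r/4)"
      by (rule inner_bound_L1) (use qi in \<open>auto intro: less_imp_le\<close>)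
    moreover have "a \<bullet> fst q - b = (a \<bullet> fst p1 - b) + a \<bullet> (fst q - fst p1)"
      by (simp add: inner_diff_right)
    moreover have "r / 4 \<le> L1 a * (r / 4)" using L r0 by simp
    moreover have "r/2 * L1 a = 2 * (L1 a * (r/4))" by simp
    moreover have "8 * e * s = 8 * (e * s)" by simp
    ultimately show ?thesis using c1 e by linarith
  qed
  ultimately show "q \<in> U" using W1 by blast
qed

lemma core_cubes:
  fixes S :: "'n::finite ppoint set" and a :: "real^'n"
  assumes a: "norm a = 1" and e: "0 < e" "0 < s" "8 * e * s < r" "r \<le> s / 2"
    and flat: "\<forall>q\<in>S \<inter> pcube (s/2) z. \<bar>a \<bullet> fst q - b\<bar> \<le> e * s"
    and Q1: "pcube r p1 \<subseteq> pcube (s/2) z" and Q2: "pcube r p2 \<subseteq> pcube (s/2) z"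
    and U: "U1 \<in> components (- S)" "U2 \<in> components (- S)" "U1 \<noteq> U2"
    and QU1: "pcube r p1 \<subseteq> U1" and QU2: "pcube r p2 \<subseteq> U2"
    and m1: "\<exists>q\<in>pcube r p1. e * s < a \<bullet> fst q - b"
    and m2: "\<exists>q\<in>pcube r p2. a \<bullet> fst q - b < - (e * s)"
  shows "pcube (r/4) (fst p1, snd z) \<subseteq> U1 \<and> pcube (r/4) (fst p2, snd z) \<subseteq> U2"
proof -
  define W1 where "W1 = pcube (s/2) z \<inter> {q. e * s < a \<bullet> fst q - b}"
  define W2 where "W2 = pcube (s/2) z \<inter> {q. a \<bullet> fst q - b < - (e * s)}"
  have es: "0 < e * s" using e by simp
  have W1S: "W1 \<subseteq> - S"
  proof
    fix q assume qW: "q \<in> W1"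
    show "q \<in> - S"
    proof
      assume "q \<in> S"
      then have "\<bar>a \<bullet> fst q - b\<bar> \<le> e * s" using flat qW unfolding W1_def by blast
      then show False using qW unfolding W1_def by auto
    qed
  qed
  have W2S: "W2 \<subseteq> - S"
  proof
    fix q assume qW: "q \<in> W2"
    show "q \<in> - S"
    proof
      assume "q \<in> S"
      then have "\<bar>a \<bullet> fst q - b\<bar> \<le> e * s" using flat qW unfolding W2_def by blast
      then show False using qW unfolding W2_def by auto
    qed
  qed
  have cW1: "connected W1" unfolding W1_def by (rule convex_connected[OF convex_W1])
  have cW2: "connected W2" unfolding W2_def by (rule convex_connected[OF convex_W2])
  have "U1 \<inter> W1 \<noteq> {}" using m1 QU1 Q1 unfolding W1_def by blast
  then have W1U1: "W1 \<subseteq> U1" by (rule components_maximal[OF U(1) cW1 W1S])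
  have "U2 \<inter> W2 \<noteq> {}" using m2 QU2 Q2 unfolding W2_def by blast
  then have W2U2: "W2 \<subseteq> U2" by (rule components_maximal[OF U(2) cW2 W2S])
  have disj: "U1 \<inter> U2 = {}" using components_nonoverlap[OF U(1) U(2)] U(3) by simp
  have A: "pcube (r/4) (fst p1, snd z) \<subseteq> U1"
    by (rule half_cube[OF a e Q1 QU1]) (use W1U1 W2U2 disj in \<open>auto simp: W1_def W2_def\<close>)
  have a': "norm (- a) = 1" using a by simp
  have B: "pcube (r/4) (fst p2, snd z) \<subseteq> U2"
    by (rule half_cube[OF a' e Q2 QU2, of "- b"])
       (use W1U1 W2U2 disj in \<open>auto simp: W1_def W2_def inner_minus_left\<close>)
  show ?thesis using A B by blast
qed

lemma sync_local:
  fixes S :: "'n::finite ppoint set" and a :: "real^'n"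
  assumes a: "norm a = 1" and e: "0 < e" "0 < s" "8 * e * s < r" "r \<le> s / 2"
    and flat: "\<forall>q\<in>S \<inter> pcube (s/2) z. \<bar>a \<bullet> fst q - b\<bar> \<le> e * s"
    and Q1: "pcube r p1 \<subseteq> pcube (s/2) z" and Q2: "pcube r p2 \<subseteq> pcube (s/2) z"
    and U: "U1 \<in> components (- S)" "U2 \<in> components (- S)" "U1 \<noteq> U2"
    and QU1: "pcube r p1 \<subseteq> U1" and QU2: "pcube r p2 \<subseteq> U2"
  shows "pcube (r/4) (fst p1, snd z) \<subseteq> U1 \<and> pcube (r/4) (fst p2, snd z) \<subseteq> U2"
proof -
  have L: "1 \<le> L1 a" using L1_ge_norm[of a] a by simp
  have r0: "0 < r" using e by (smt (verit) mult_pos_pos)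
  have es: "0 < e * s" using e by simp
  have "2 * (e * s) < r" using e es by linarith
  define M1 where "M1 p \<longleftrightarrow> (\<exists>q\<in>pcube r p. e * s < a \<bullet> fst q - b)" for p
  define M2 where "M2 p \<longleftrightarrow> (\<exists>q\<in>pcube r p. a \<bullet> fst q - b < - (e * s))" for p
  have M12: "M1 p \<or> M2 p" for p
  proof (cases "a \<bullet> fst p - b \<ge> 0")
    case True
    define xp where "xp = (fst p + (r/2) *\<^sub>R sgv a, snd p)"
    have "xp \<in> pcube r p"
      unfolding pcube_iff xp_def using sgv_small[OF r0, of a] r0 by auto
    moreover have "a \<bullet> fst xp = a \<bullet> fst p + (r/2) * L1 a"
      unfolding xp_def by (simp add: inner_add_right inner_sgv inner_sgv1)
    moreover have "r/2 \<le> (r/2) * L1 a" using L r0 by simp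
    ultimately have "M1 p" unfolding M1_def using True \<open>2 * (e * s) < r\<close>
      by (intro bexI[of _ xp]) auto
    then show ?thesis ..
  next
    case False
    define xm where "xm = (fst p - (r/2) *\<^sub>R sgv a, snd p)"
    have "xm \<in> pcube r p"
      unfolding pcube_iff xm_def using sgv_small[OF r0, of a] r0 by (auto simp: abs_minus_commute)
    moreover have "a \<bullet> fst xm = a \<bullet> fst p - (r/2) * L1 a"
      unfolding xm_def by (simp add: inner_diff_right inner_sgv inner_sgv1)
    moreover have "r/2 \<le> (r/2) * L1 a" using L r0 by simp
    ultimately have "M2 p" unfolding M2_def using False \<open>2 * (e * s) < r\<close>
      by (intro bexI[of _ xm]) auto
    then show ?thesis ..
  qed
  define W1 where "W1 = pcube (s/2) z \<inter> {q. e * s < a \<bullet> fst q - b}"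
  define W2 where "W2 = pcube (s/2) z \<inter> {q. a \<bullet> fst q - b < - (e * s)}"
  have W1S: "W1 \<subseteq> - S"
  proof
    fix q assume qW: "q \<in> W1"
    show "q \<in> - S"
    proof
      assume "q \<in> S"
      then have "\<bar>a \<bullet> fst q - b\<bar> \<le> e * s" using flat qW unfolding W1_def by blast
      then show False using qW unfolding W1_def by auto
    qed
  qed
  have W2S: "W2 \<subseteq> - S"
  proof
    fix q assume qW: "q \<in> W2"
    show "q \<in> - S"
    proof
      assume "q \<in> S"
      then have "\<bar>a \<bullet> fst q - b\<bar> \<le> e * s" using flat qW unfolding W2_def by blast
      then show False using qW unfolding W2_def by auto
    qed
  qed
  have cW1: "connected W1" unfolding W1_def by (rule convex_connected[OF convex_W1])
  have cW2: "connected W2" unfolding W2_def by (rule convex_connected[OF convex_W2])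
  have disj: "U1 \<inter> U2 = {}" using components_nonoverlap[OF U(1) U(2)] U(3) by simp
  have not11: "\<not> (M1 p1 \<and> M1 p2)"
  proof
    assume "M1 p1 \<and> M1 p2"
    then obtain q1 q2 where q: "q1 \<in> pcube r p1" "e * s < a \<bullet> fst q1 - b"
        "q2 \<in> pcube r p2" "e * s < a \<bullet> fst q2 - b" unfolding M1_def by blast
    have "q1 \<in> W1" "q2 \<in> W1" using q Q1 Q2 unfolding W1_def by auto
    then have "W1 \<subseteq> U1" "W1 \<subseteq> U2" using q QU1 QU2
      by (auto intro!: components_maximal[OF U(1) cW1 W1S] components_maximal[OF U(2) cW2 W2S]
            components_maximal[OF U(2) cW1 W1S])
    then show False using disj \<open>q1 \<in> W1\<close> by blast
  qed
  have not22: "\<not> (M2 p1 \<and> M2 p2)"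
  proof
    assume "M2 p1 \<and> M2 p2"
    then obtain q1 q2 where q: "q1 \<in> pcube r p1" "a \<bullet> fst q1 - b < - (e * s)"
        "q2 \<in> pcube r p2" "a \<bullet> fst q2 - b < - (e * s)" unfolding M2_def by blast
    have "q1 \<in> W2" "q2 \<in> W2" using q Q1 Q2 unfolding W2_def by auto
    then have "W2 \<subseteq> U1" "W2 \<subseteq> U2" using q QU1 QU2
      by (auto intro!: components_maximal[OF U(1) cW2 W2S] components_maximal[OF U(2) cW2 W2S])
    then show False using disj \<open>q1 \<in> W2\<close> by blast
  qed
  have "(M1 p1 \<and> M2 p2) \<or> (M2 p1 \<and> M1 p2)" using M12[of p1] M12[of p2] not11 not22 by blast
  then show ?thesis
  proof
    assume "M1 p1 \<and> M2 p2"
    then show ?thesis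
      by (intro core_cubes[OF a e flat Q1 Q2 U QU1 QU2]) (auto simp: M1_def M2_def)
  next
    assume "M2 p1 \<and> M1 p2"
    moreover have "norm (- a) = 1" using a by simp
    moreover have "\<forall>q\<in>S \<inter> pcube (s/2) z. \<bar>(- a) \<bullet> fst q - (- b)\<bar> \<le> e * s"
      using flat by (auto simp: abs_minus_commute)
    moreover obtain q1 where "q1 \<in> pcube r p1" "a \<bullet> fst q1 - b < - (e * s)"
      using \<open>M2 p1 \<and> M1 p2\<close> unfolding M2_def by blast
    moreover obtain q2 where "q2 \<in> pcube r p2" "e * s < a \<bullet> fst q2 - b"
      using \<open>M2 p1 \<and> M1 p2\<close> unfolding M1_def by blast
    ultimately show ?thesis
      by (intro core_cubes[OF _ e _ Q1 Q2 U QU1 QU2, of "- a" "- b"] bexI[of _ q1] bexI[of _ q2]) auto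
  qed
qed

lemma open_pcube: "open (pcube r p)"
proof -
  have "pcube r p = (\<Inter>i\<in>UNIV. {q. \<bar>fst q $ i - fst p $ i\<bar> < r}) \<inter> {q. \<bar>snd p - snd q\<bar> < r\<^sup>2}"
    unfolding pcube_def by auto
  moreover have "open (\<Inter>i\<in>UNIV. {q::'a::finite ppoint. \<bar>fst q $ i - fst p $ i\<bar> < r})"
    by (intro open_INT ballI open_Collect_less continuous_intros) auto
  moreover have "open {q::'a ppoint. \<bar>snd p - snd q\<bar> < r\<^sup>2}"
    by (intro open_Collect_less continuous_intros)
  ultimately show ?thesis by auto
qed

lemma borel_S_pcube: "closed S \<Longrightarrow> S \<inter> pcube r p \<in> sets borel"
  using open_pcube[of r p] by (intro sets.Int[of S borel "pcube r p"] borel_closed borel_open) auto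

lemma flat_from_beta:
  fixes S :: "'n::finite ppoint set" and a :: "real^'n" and e :: real
  defines "k \<equiv> CARD('n) + 1"
  defines "\<kappa> \<equiv> e / (2 * real CARD('n))"
  assumes S: "closed S" and ADR: "parabolic_ADR M S" and M: "0 < M"
    and s: "0 < s" "ennreal s < pdiam S"
    and rng: "\<forall>q\<in>pcube s z. in_time_range S (snd q)"
    and P: "P \<in> time_planes" and a: "norm a = 1" "\<forall>y\<in>P. a \<bullet> fst y = b"
    and e: "0 < e" "e \<le> 1"
    and small: "ennreal (1 / s ^ k) * (\<integral>\<^sup>+ q\<in>(S \<inter> pcube s z). ennreal ((pdist_set q P / s)\<^sup>2) \<partial>psigma S)
        < ennreal (e\<^sup>2 * \<kappa> ^ k / (4 * M))"
  shows "\<forall>q\<in>S \<inter> pcube (s/2) z. \<bar>a \<bullet> fst q - b\<bar> \<le> e * s"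
proof (rule ccontr)
  assume "\<not> ?thesis"
  then obtain q0 where q0: "q0 \<in> S" "q0 \<in> pcube (s/2) z" and far: "e * s < \<bar>a \<bullet> fst q0 - b\<bar>"
    by auto
  have N1: "1 \<le> real CARD('n)" by simp
  have kap: "0 < \<kappa>" "\<kappa> \<le> 1/2" using e N1 unfolding \<kappa>_def by (auto simp: field_simps intro: order_trans[OF e(2) N1])
  define \<rho> where "\<rho> = \<kappa> * s"
  have rho: "0 < \<rho>" "\<rho> \<le> s/2" using kap s unfolding \<rho>_def by auto
  have Lr: "L1 a * \<rho> \<le> e * s / 2"
  proof -
    have "L1 a * \<rho> \<le> real CARD('n) * \<rho>" using L1_le_card[OF a(1)] rho by (intro mult_right_mono) auto
    also have "\<dots> = e * s / 2" unfolding \<rho>_def \<kappa>_def using N1 by (simp add: field_simps)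
    finally show ?thesis .
  qed
  have Qsub: "pcube \<rho> q0 \<subseteq> pcube s z"
  proof
    fix q assume q: "q \<in> pcube \<rho> q0"
    have "\<bar>fst q $ i - fst z $ i\<bar> < s" for i
    proof -
      have "\<bar>fst q $ i - fst q0 $ i\<bar> < \<rho>" "\<bar>fst q0 $ i - fst z $ i\<bar> < s/2"
        using q q0(2) unfolding pcube_iff by auto
      then show ?thesis using rho by linarith
    qed
    moreover have "\<bar>snd z - snd q\<bar> < s\<^sup>2"
    proof -
      have "\<rho>\<^sup>2 \<le> (s/2)\<^sup>2" using rho by (intro power_mono) auto
      then have "\<bar>snd z - snd q\<bar> < (s/2)\<^sup>2 + (s/2)\<^sup>2" using q q0(2) unfolding pcube_iff by linarith
      also have "\<dots> < s\<^sup>2" using s by (simp add: power2_eq_square field_simps)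
      finally show ?thesis .
    qed
    ultimately show "q \<in> pcube s z" unfolding pcube_iff by auto
  qed
  have Pne: "P \<noteq> {}" using P unfolding time_planes_def by auto
  have lowq: "(e/2)\<^sup>2 \<le> (pdist_set q P / s)\<^sup>2" if q: "q \<in> pcube \<rho> q0" for q
  proof -
    have "\<bar>a \<bullet> (fst q - fst q0)\<bar> \<le> L1 a * \<rho>"
      by (rule inner_bound_L1) (use q in \<open>auto simp: pcube_iff abs_minus_commute intro: less_imp_le\<close>)
    moreover have "a \<bullet> fst q - b = (a \<bullet> fst q0 - b) + a \<bullet> (fst q - fst q0)" by (simp add: inner_diff_right)
    ultimately have "e * s / 2 \<le> \<bar>a \<bullet> fst q - b\<bar>" using far Lr by linarith
    also have "\<dots> \<le> pdist_set q P" by (rule pdist_set_lower[OF Pne a])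
    finally have "e / 2 \<le> pdist_set q P / s" using s by (simp add: field_simps)
    then show ?thesis using e by (intro power_mono) auto
  qed
  have meas: "S \<inter> pcube \<rho> q0 \<in> sets borel" by (rule borel_S_pcube[OF S])
  have "ennreal ((e/2)\<^sup>2) * emeasure (psigma S) (S \<inter> pcube \<rho> q0)
      = (\<integral>\<^sup>+ q. ennreal ((e/2)\<^sup>2) * indicator (S \<inter> pcube \<rho> q0) q \<partial>psigma S)"
    using meas by (simp add: nn_integral_cmult_indicator)
  also have "\<dots> \<le> (\<integral>\<^sup>+ q\<in>(S \<inter> pcube s z). ennreal ((pdist_set q P / s)\<^sup>2) \<partial>psigma S)"
    using Qsub lowq by (intro nn_integral_mono) (auto split: split_indicator intro: ennreal_leI)
  finally have I1: "ennreal ((e/2)\<^sup>2) * emeasure (psigma S) (S \<inter> pcube \<rho> q0)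
      \<le> (\<integral>\<^sup>+ q\<in>(S \<inter> pcube s z). ennreal ((pdist_set q P / s)\<^sup>2) \<partial>psigma S)" .
  have "emeasure (psigma S) (S \<inter> pcube \<rho> q0) = phaus k (S \<inter> pcube \<rho> q0)"
    using emeasure_psigma[OF meas, of S] unfolding k_def by (simp add: Int_absorb Int_commute Int_left_commute)
  moreover have "ennreal (\<rho> ^ k / M) \<le> phaus k (S \<inter> pcube \<rho> q0)"
  proof -
    have "q0 \<in> pcube \<rho> q0" using rho by (simp add: pcube_iff)
    then have "in_time_range S (snd q0)" using rng Qsub by blast
    moreover have "ennreal \<rho> < pdiam S"
      by (rule le_less_trans[OF ennreal_leI s(2)]) (use rho s in linarith)
    ultimately show ?thesis using ADR q0(1) rho unfolding parabolic_ADR_def k_def by blast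
  qed
  ultimately have I2: "ennreal (\<rho> ^ k / M) \<le> emeasure (psigma S) (S \<inter> pcube \<rho> q0)" by simp
  have "ennreal (e\<^sup>2 * \<kappa> ^ k / (4 * M)) = ennreal (1 / s ^ k) * (ennreal ((e/2)\<^sup>2) * ennreal (\<rho> ^ k / M))"
    using s M kap unfolding \<rho>_def
    by (simp add: ennreal_mult'[symmetric] ennreal_mult[symmetric] power_mult_distrib field_simps)
  also have "\<dots> \<le> ennreal (1 / s ^ k) * (\<integral>\<^sup>+ q\<in>(S \<inter> pcube s z). ennreal ((pdist_set q P / s)\<^sup>2) \<partial>psigma S)"
    using I1 I2 by (intro mult_left_mono order_trans[OF mult_left_mono[OF I2]]) auto
  finally show False using small by simp
qed

lemma log_integral:
  fixes \<eta> K r :: real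
  assumes "0 < \<eta>" "0 < r" "0 < K"
  defines "\<delta> \<equiv> exp (- K) / 4"
  shows "(\<integral>\<^sup>+ s. ennreal (\<eta> / s) * indicator {\<delta> * r .. r/4} s \<partial>lborel) = ennreal (\<eta> * K)"
proof -
  have d: "0 < \<delta>" "\<delta> * r \<le> r / 4" using assms by (auto simp: \<delta>_def)
  have "(\<integral>\<^sup>+ s. ennreal (\<eta> / s) * indicator {\<delta> * r .. r/4} s \<partial>lborel)
      = ennreal ((\<lambda>x. \<eta> * ln x) (r/4) - (\<lambda>x. \<eta> * ln x) (\<delta> * r))"
  proof (rule nn_integral_FTC_Icc)
    show "(\<lambda>s. \<eta> / s) \<in> borel_measurable borel" by measurable
    show "((\<lambda>x. \<eta> * ln x) has_real_derivative \<eta> / x) (at x)" if "x \<in> {\<delta> * r..r / 4}" for x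
    proof -
      have "0 < x" using that d assms by (smt (verit) atLeastAtMost_iff mult_pos_pos)
      then show ?thesis by (auto intro!: derivative_eq_intros simp: field_simps)
    qed
    show "0 \<le> \<eta> / x" if "x \<in> {\<delta> * r..r / 4}" for x
    proof -
      have "0 < x" using that d assms by (smt (verit) atLeastAtMost_iff mult_pos_pos)
      then show ?thesis using assms by simp
    qed
    show "\<delta> * r \<le> r / 4" by (rule d(2))
  qed
  also have "(\<lambda>x. \<eta> * ln x) (r/4) - (\<lambda>x. \<eta> * ln x) (\<delta> * r) = \<eta> * K"
  proof -
    have "\<delta> * r = exp (- K) * (r / 4)" by (simp add: \<delta>_def)
    moreover have ne: "exp (- K) \<noteq> 0 \<and> r/4 \<noteq> 0" using assms by simp
    moreover have "ln (exp (- K) * (r / 4)) = ln (exp (- K)) + ln (r/4)"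
      using ln_mult[of "exp (- K)" "r/4"] ne by (simp only: if_True not_False_eq_True conj_absorb)
    ultimately have "ln (\<delta> * r) = - K + ln (r/4)" by (simp only: ln_exp)
    then have "\<eta> * ln (r / 4) = \<eta> * (K + ln (\<delta> * r))" by simp
    then show ?thesis by (simp add: algebra_simps)
  qed
  finally show ?thesis .
qed

lemma carleson_pick:
  fixes S :: "'n::finite ppoint set" and Mt M \<eta> r :: real
  defines "k \<equiv> CARD('n) + 1"
  defines "K \<equiv> max 0 (Mt * M / \<eta>) + 1"
  defines "\<delta> \<equiv> exp (- K) / 4"
  assumes S: "closed S" and M: "0 < M" and eta: "0 < \<eta>" and r: "0 < r"
    and UR: "nu_box S p (r/2) \<le> ennreal (Mt * (r/2) ^ k)"
    and lowm: "ennreal ((r/2) ^ k / M) \<le> emeasure (psigma S) (S \<inter> pcube (r/2) p)"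
  shows "\<exists>z\<in>S \<inter> pcube (r/2) p. \<exists>s. \<delta> * r \<le> s \<and> s \<le> r/4 \<and> beta_sq S z s < ennreal \<eta>"
proof (rule ccontr)
  assume "\<not> ?thesis"
  then have big: "\<And>z s. z \<in> S \<inter> pcube (r/2) p \<Longrightarrow> \<delta> * r \<le> s \<Longrightarrow> s \<le> r/4 \<Longrightarrow> ennreal \<eta> \<le> beta_sq S z s"
    by (meson not_le)
  have K: "0 < K" unfolding K_def by simp
  have d: "0 < \<delta>" unfolding \<delta>_def by simp
  have inner: "ennreal (\<eta> * K) \<le> (\<integral>\<^sup>+ s\<in>{0<..<r/2}. beta_sq S z s * ennreal (1 / s) \<partial>lborel)"
    if z: "z \<in> S \<inter> pcube (r/2) p" for z
  proof -
    have "ennreal (\<eta> * K) = (\<integral>\<^sup>+ s. ennreal (\<eta> / s) * indicator {\<delta> * r .. r/4} s \<partial>lborel)"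
      using log_integral[OF eta r K] unfolding \<delta>_def by simp
    also have "\<dots> \<le> (\<integral>\<^sup>+ s\<in>{0<..<r/2}. beta_sq S z s * ennreal (1 / s) \<partial>lborel)"
    proof (rule nn_integral_mono)
      fix s :: real
      show "ennreal (\<eta> / s) * indicator {\<delta> * r .. r/4} s \<le> beta_sq S z s * ennreal (1 / s) * indicator {0<..<r/2} s"
      proof (cases "s \<in> {\<delta> * r .. r/4}")
        case True
        then have s0: "0 < s" "s < r/2" using d r by (auto intro: less_le_trans[of 0 "\<delta> * r"])
        have "ennreal (\<eta> / s) = ennreal \<eta> * ennreal (1 / s)"
          using eta s0 by (simp add: ennreal_mult[symmetric])
        also have "\<dots> \<le> beta_sq S z s * ennreal (1 / s)"
          using big[OF z] True by (intro mult_right_mono) auto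
        finally show ?thesis using True s0 by simp
      next
        case False then show ?thesis by simp
      qed
    qed
    finally show ?thesis .
  qed
  have meas: "S \<inter> pcube (r/2) p \<in> sets borel" by (rule borel_S_pcube[OF S])
  have "ennreal (\<eta> * K) * ennreal ((r/2) ^ k / M) \<le> ennreal (\<eta> * K) * emeasure (psigma S) (S \<inter> pcube (r/2) p)"
    using lowm by (rule mult_left_mono) simp
  also have "\<dots> = (\<integral>\<^sup>+ z. ennreal (\<eta> * K) * indicator (S \<inter> pcube (r/2) p) z \<partial>psigma S)"
    using meas by (simp add: nn_integral_cmult_indicator)
  also have "\<dots> \<le> nu_box S p (r/2)"
    unfolding nu_box_def
    by (intro nn_integral_mono) (auto split: split_indicator intro: inner)
  also have "\<dots> \<le> ennreal (Mt * (r/2) ^ k)" by (rule UR)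
  finally have ineq: "ennreal (\<eta> * K * ((r/2) ^ k / M)) \<le> ennreal (Mt * (r/2) ^ k)"
    using eta K M r by (simp add: ennreal_mult[symmetric])
  have pos: "0 < (r/2) ^ k" using r by simp
  have "Mt * (r/2) ^ k < \<eta> * K * ((r/2) ^ k / M)"
  proof -
    have "Mt * M / \<eta> < K" unfolding K_def by linarith
    then have "Mt * M < \<eta> * K" using eta by (simp add: field_simps)
    then have "Mt < \<eta> * K / M" using M by (simp add: field_simps)
    then have "Mt * (r/2) ^ k < (\<eta> * K / M) * (r/2) ^ k" using pos by (rule mult_strict_right_mono)
    then show ?thesis by simp
  qed
  moreover have "0 < \<eta> * K * ((r/2) ^ k / M)" using eta K M pos by simp
  ultimately have "ennreal (Mt * (r/2) ^ k) < ennreal (\<eta> * K * ((r/2) ^ k / M))"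
    by (intro ennreal_lessI) simp_all
  then show False using ineq by simp
qed

lemma pcube_sub:
  assumes "\<And>i. \<bar>fst c $ i - fst d $ i\<bar> + \<rho> \<le> R" "\<bar>snd c - snd d\<bar> + \<rho>\<^sup>2 \<le> R\<^sup>2"
  shows "pcube \<rho> c \<subseteq> pcube R d"
proof
  fix q assume q: "q \<in> pcube \<rho> c"
  have "\<bar>fst q $ i - fst d $ i\<bar> < R" for i
  proof -
    have "\<bar>fst q $ i - fst c $ i\<bar> < \<rho>" using q unfolding pcube_iff by auto
    then show ?thesis using assms(1)[of i] by linarith
  qed
  moreover have "\<bar>snd d - snd q\<bar> < R\<^sup>2"
  proof -
    have "\<bar>snd c - snd q\<bar> < \<rho>\<^sup>2" using q unfolding pcube_iff by auto
    then show ?thesis using assms(2) by linarith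
  qed
  ultimately show "q \<in> pcube R d" unfolding pcube_iff by auto
qed

lemma shift_in:
  assumes "pcube \<rho> p1 \<subseteq> pcube R z" "0 < \<rho>" "\<rho> \<le> R"
  shows "pcube (\<rho>/4) (fst p1, snd z) \<subseteq> pcube R z"
proof
  fix q assume q: "q \<in> pcube (\<rho>/4) (fst p1, snd z)"
  then have qi: "\<And>i. \<bar>fst q $ i - fst p1 $ i\<bar> < \<rho>/4" and qt: "\<bar>snd z - snd q\<bar> < (\<rho>/4)\<^sup>2"
    unfolding pcube_iff by auto
  have qi': "\<bar>fst q $ i - fst p1 $ i\<bar> < \<rho>" for i using qi[of i] assms(2) by linarith
  have "(fst q, snd p1) \<in> pcube \<rho> p1" unfolding pcube_iff using qi' assms(2) by auto
  then have "(fst q, snd p1) \<in> pcube R z" using assms(1) by auto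
  then have qs: "\<And>i. \<bar>fst q $ i - fst z $ i\<bar> < R" unfolding pcube_iff by auto
  have "(\<rho>/4)\<^sup>2 \<le> R\<^sup>2" using assms by (intro power_mono) auto
  then show "q \<in> pcube R z" unfolding pcube_iff using qs qt by auto
qed

lemma no_range_below:
  assumes "T0 S \<ge> ereal c" "\<forall>q\<in>A. snd q < c"
  shows "A \<inter> {q. in_time_range S (snd q)} = {}"
proof (rule ccontr)
  assume "\<not> ?thesis"
  then obtain q where q: "q \<in> A" "T0 S < ereal (snd q)" unfolding in_time_range_def by auto
  have "ereal (snd q) < ereal c" using assms(2) q(1) by simp
  with q(2) have "T0 S < ereal c" by (rule less_trans)
  then show False using leD[OF assms(1)] by blast
qed

lemma no_range_above:
  assumes "T1 S \<le> ereal c" "\<forall>q\<in>A. c < snd q"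
  shows "A \<inter> {q. in_time_range S (snd q)} = {}"
proof (rule ccontr)
  assume "\<not> ?thesis"
  then obtain q where q: "q \<in> A" "ereal (snd q) < T1 S" unfolding in_time_range_def by auto
  have "ereal c < ereal (snd q)" using assms(2) q(1) by simp
  then have "ereal c < T1 S" using q(2) by (rule less_trans)
  then show False using leD[OF assms(1)] by blast
qed

lemma lin_aux:
  fixes X A B S2 R2 :: real
  shows "A < S2 \<Longrightarrow> X \<le> A + B \<Longrightarrow> B * 4 < R2 \<Longrightarrow> S2 * 16 \<le> R2 \<Longrightarrow> 0 \<le> A \<Longrightarrow> X < R2 / 2"
  by linarith

lemma lin_aux2:
  fixes B S2 R2 :: real
  shows "B * 4 < R2 \<Longrightarrow> 16 * S2 \<le> R2 \<Longrightarrow> 0 \<le> R2 \<Longrightarrow> B + S2 / 4 \<le> R2"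
  by linarith

lemma caseC:
  fixes S :: "'n::finite ppoint set" and M Mt \<gamma>0 r :: real
  defines "k \<equiv> CARD('n) + 1"
  defines "\<epsilon> \<equiv> \<gamma>0 / 32"
  defines "\<kappa> \<equiv> \<epsilon> / (2 * real CARD('n))"
  defines "\<eta> \<equiv> \<epsilon>\<^sup>2 * \<kappa> ^ k / (4 * M)"
  defines "K \<equiv> max 0 (Mt * M / \<eta>) + 1"
  defines "\<delta> \<equiv> exp (- K) / 4"
  assumes M: "0 < M" and g: "0 < \<gamma>0" "\<gamma>0 < 1"
    and S: "closed S" and ADR: "parabolic_ADR M S" and CS: "corkscrew \<gamma>0 S" and UR: "parabolic_UR M Mt S"
    and p: "p \<in> S" "in_time_range S (snd p)" and r: "0 < r" "ennreal r < pdiam S"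
    and T0: "T0 S < ereal (snd p - r\<^sup>2/2)" and T1: "ereal (snd p + r\<^sup>2/2) < T1 S"
  shows "\<exists>\<rho> p1 p2. \<gamma>0 * \<delta> / 8 * r \<le> \<rho> \<and> \<rho> < r \<and> pcube \<rho> p1 \<subseteq> pcube r p \<and> pcube \<rho> p2 \<subseteq> pcube r p \<and>
           snd p1 = snd p2 \<and>
           (\<exists>U1 U2. U1 \<in> components (- S) \<and> U2 \<in> components (- S) \<and> U1 \<noteq> U2 \<and>
              pcube \<rho> p1 \<inter> {q. in_time_range S (snd q)} \<subseteq> U1 \<and>
              pcube \<rho> p2 \<inter> {q. in_time_range S (snd q)} \<subseteq> U2)"
proof -
  have N1: "1 \<le> real CARD('n)" by simp
  have eps: "0 < \<epsilon>" "\<epsilon> \<le> 1" using g unfolding \<epsilon>_def by auto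
  have kap: "0 < \<kappa>" unfolding \<kappa>_def using eps N1 by simp
  have eta: "0 < \<eta>" unfolding \<eta>_def using eps kap M by simp
  have d: "0 < \<delta>" "\<delta> \<le> 1/4" unfolding \<delta>_def K_def by auto
  have rng: "in_time_range S (snd q)" if "\<bar>snd q - snd p\<bar> < r\<^sup>2/2" for q
  proof -
    have "snd p - r\<^sup>2/2 \<le> snd q" "snd q \<le> snd p + r\<^sup>2/2" using that by linarith+
    then have "ereal (snd p - r\<^sup>2/2) \<le> ereal (snd q)" "ereal (snd q) \<le> ereal (snd p + r\<^sup>2/2)"
      by auto
    then show ?thesis unfolding in_time_range_def using T0 T1 by (meson less_le_trans le_less_trans)
  qed
  have r2: "0 < r/2" "ennreal (r/2) < pdiam S"
    using r by (auto intro: le_less_trans[OF ennreal_leI r(2)])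
  have lowphaus: "ennreal ((r/2) ^ k / M) \<le> phaus k (S \<inter> pcube (r/2) p)"
    using ADR p r2 unfolding parabolic_ADR_def k_def by blast
  have lowm: "ennreal ((r/2) ^ k / M) \<le> emeasure (psigma S) (S \<inter> pcube (r/2) p)"
    using lowphaus emeasure_psigma[OF borel_S_pcube[OF S, of "r/2" p], of S] unfolding k_def
    by (simp add: Int_absorb Int_commute Int_left_commute)
  have URb: "nu_box S p (r/2) \<le> ennreal (Mt * (r/2) ^ k)"
    using UR p r2 unfolding parabolic_UR_def k_def by blast
  obtain z s where z: "z \<in> S \<inter> pcube (r/2) p" and sr: "\<delta> * r \<le> s" "s \<le> r/4"
      and bs: "beta_sq S z s < ennreal \<eta>"
    using carleson_pick[OF S M eta r(1) URb[unfolded k_def] lowm[unfolded k_def]]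
    unfolding \<delta>_def K_def by blast
  have s0: "0 < s" using sr d r by (smt (verit) mult_pos_pos)
  have spd: "ennreal s < pdiam S" using sr r by (intro le_less_trans[OF ennreal_leI r(2)]) auto
  obtain P where P: "P \<in> time_planes"
    and Ps: "ennreal (1 / s ^ k) * (\<integral>\<^sup>+ q\<in>(S \<inter> pcube s z). ennreal ((pdist_set q P / s)\<^sup>2) \<partial>psigma S)
        < ennreal \<eta>"
    using bs unfolding beta_sq_def k_def INF_less_iff by blast
  obtain a b where a: "norm a = 1" "\<forall>y\<in>P. a \<bullet> fst y = b" using time_plane_normal[OF P] by blast
  have zp: "\<bar>snd p - snd z\<bar> < (r/2)\<^sup>2" "\<And>i. \<bar>fst z $ i - fst p $ i\<bar> < r/2"
    using z by (auto simp: pcube_iff)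
  have s2: "s\<^sup>2 \<le> (r/4)\<^sup>2" using s0 sr by (intro power_mono) auto
  have rngz: "\<forall>q\<in>pcube s z. in_time_range S (snd q)"
  proof
    fix q assume "q \<in> pcube s z"
    then have "\<bar>snd z - snd q\<bar> < s\<^sup>2" unfolding pcube_iff by auto
    moreover have "\<bar>snd q - snd p\<bar> \<le> \<bar>snd z - snd q\<bar> + \<bar>snd p - snd z\<bar>" by linarith
    moreover have "\<bar>snd p - snd z\<bar> * 4 < r\<^sup>2" using zp(1) by (simp add: power_divide)
    moreover have "s\<^sup>2 * 16 \<le> r\<^sup>2" using s2 by (simp add: power_divide)
    moreover have "0 \<le> \<bar>snd z - snd q\<bar>" by simp
    ultimately have "\<bar>snd q - snd p\<bar> < r\<^sup>2 / 2" by (rule lin_aux)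
    then show "in_time_range S (snd q)" by (rule rng)
  qed
  have flat: "\<forall>q\<in>S \<inter> pcube (s/2) z. \<bar>a \<bullet> fst q - b\<bar> \<le> \<epsilon> * s"
    by (rule flat_from_beta[OF S ADR M s0 spd rngz P a eps]) (use Ps in \<open>simp add: \<eta>_def \<kappa>_def k_def\<close>)
  have zin: "z \<in> pcube s z" using s0 by (simp add: pcube_iff)
  have s2pd: "ennreal (s/2) < pdiam S" using s0 by (intro le_less_trans[OF ennreal_leI spd]) auto
  obtain \<rho> p1 p2 U1 U2 where rho: "\<gamma>0 * (s/2) \<le> \<rho>" "\<rho> < s/2"
      and Q1: "pcube \<rho> p1 \<subseteq> pcube (s/2) z" and Q2: "pcube \<rho> p2 \<subseteq> pcube (s/2) z"
      and U: "U1 \<in> components (- S)" "U2 \<in> components (- S)" "U1 \<noteq> U2"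
      and QU1': "pcube \<rho> p1 \<inter> {q. in_time_range S (snd q)} \<subseteq> U1"
      and QU2': "pcube \<rho> p2 \<inter> {q. in_time_range S (snd q)} \<subseteq> U2"
    using CS z rngz zin s0 s2pd unfolding corkscrew_def two_cube_def
    by (metis (no_types, lifting) IntD1 half_gt_zero)
  have hs: "pcube (s/2) z \<subseteq> pcube s z" using s0 by (intro pcube_sub) (auto simp: power_divide)
  have QU1: "pcube \<rho> p1 \<subseteq> U1" using QU1' Q1 hs rngz by blast
  have QU2: "pcube \<rho> p2 \<subseteq> U2" using QU2' Q2 hs rngz by blast
  have rho0: "0 < \<rho>" using rho g s0 by (smt (verit) mult_pos_pos half_gt_zero)
  have e8: "8 * \<epsilon> * s < \<rho>" using rho rho0 g s0 unfolding \<epsilon>_def by (simp add: field_simps)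
  have res: "pcube (\<rho>/4) (fst p1, snd z) \<subseteq> U1 \<and> pcube (\<rho>/4) (fst p2, snd z) \<subseteq> U2"
    by (rule sync_local[OF a(1) eps(1) s0 e8 _ flat Q1 Q2 U QU1 QU2]) (use rho in simp)
  have zr: "pcube (s/2) z \<subseteq> pcube r p"
  proof (rule pcube_sub)
    show "\<bar>fst z $ i - fst p $ i\<bar> + s / 2 \<le> r" for i using zp(2)[of i] sr by linarith
    have "(s/2)\<^sup>2 \<le> (r/8)\<^sup>2" using s0 sr by (intro power_mono) auto
    then show "\<bar>snd z - snd p\<bar> + (s / 2)\<^sup>2 \<le> r\<^sup>2" using zp(1) r
    proof -
      have "\<bar>snd z - snd p\<bar> + s\<^sup>2 / 4 \<le> r\<^sup>2"
        by (rule lin_aux2) (use zp(1) \<open>(s/2)\<^sup>2 \<le> (r/8)\<^sup>2\<close> in \<open>simp_all add: power_divide abs_minus_commute\<close>)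
      then show ?thesis by (simp add: power_divide)
    qed
  qed
  have c1: "pcube (\<rho>/4) (fst p1, snd z) \<subseteq> pcube r p"
    using shift_in[OF Q1 rho0] rho zr by auto
  have c2: "pcube (\<rho>/4) (fst p2, snd z) \<subseteq> pcube r p"
    using shift_in[OF Q2 rho0] rho zr by auto
  have lb: "\<gamma>0 * \<delta> / 8 * r \<le> \<rho>/4"
  proof -
    have "\<gamma>0 * (\<delta> * r) \<le> \<gamma>0 * s" using sr g by (intro mult_left_mono) auto
    then show ?thesis using rho by (simp add: field_simps)
  qed
  have r4: "\<rho>/4 < r" using rho sr r by linarith
  show ?thesis
    apply (rule exI[of _ "\<rho>/4"])
    apply (rule exI[of _ "(fst p1, snd z)"])
    apply (rule exI[of _ "(fst p2, snd z)"])
    apply (intro conjI)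
         apply (rule lb)
        apply (rule r4)
       apply (rule c1)
      apply (rule c2)
     apply simp
    apply (rule exI[of _ U1])
    apply (rule exI[of _ U2])
    using res U by blast
qed

lemma trivial_case:
  fixes S :: "'n::finite ppoint set"
  assumes r: "0 < r" and g: "0 < \<gamma>1" "\<gamma>1 \<le> 1/2"
    and U: "U1 \<in> components (- S)" "U2 \<in> components (- S)" "U1 \<noteq> U2"
    and c: "snd c = snd p - 3 * r\<^sup>2 / 4 \<or> snd c = snd p + 3 * r\<^sup>2 / 4" "fst c = fst p"
    and emp: "pcube (r/2) c \<inter> {q. in_time_range S (snd q)} = {}"
  shows "\<exists>\<rho> p1 p2. \<gamma>1 * r \<le> \<rho> \<and> \<rho> < r \<and> pcube \<rho> p1 \<subseteq> pcube r p \<and> pcube \<rho> p2 \<subseteq> pcube r p \<and>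
           (True \<longrightarrow> snd p1 = snd p2) \<and>
           (\<exists>U1 U2. U1 \<in> components (- S) \<and> U2 \<in> components (- S) \<and> U1 \<noteq> U2 \<and>
              pcube \<rho> p1 \<inter> {q. in_time_range S (snd q)} \<subseteq> U1 \<and>
              pcube \<rho> p2 \<inter> {q. in_time_range S (snd q)} \<subseteq> U2)"
proof -
  have sub: "pcube (r/2) c \<subseteq> pcube r p"
  proof (rule pcube_sub)
    show "\<bar>fst c $ i - fst p $ i\<bar> + r / 2 \<le> r" for i using c(2) r by simp
    have "\<bar>snd c - snd p\<bar> = 3 * r\<^sup>2 / 4" using c(1) by auto
    then show "\<bar>snd c - snd p\<bar> + (r / 2)\<^sup>2 \<le> r\<^sup>2" by (simp add: power_divide)
  qed
  have "\<gamma>1 * r \<le> r / 2" using g r by (simp add: mult_right_mono)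
  then show ?thesis
    apply (rule_tac x="r/2" in exI)
    apply (rule_tac x=c in exI)
    apply (rule_tac x=c in exI)
    using sub r U emp by auto
qed

theorem theorem3p2:
  fixes M Mt \<gamma>0 :: real
  assumes "0 < M" and "0 < \<gamma>0" and "\<gamma>0 < 1"
  shows "\<exists>\<gamma>1. 0 < \<gamma>1 \<and> \<gamma>1 < 1 \<and>
    (\<forall>S :: ('n::finite) ppoint set.
       closed S \<and> parabolic_ADR M S \<and> corkscrew \<gamma>0 S \<and> parabolic_UR M Mt S
       \<longrightarrow> weak_ts_two_cube \<gamma>1 S)"
proof -
  define \<eta> where "\<eta> = (\<gamma>0 / 32)\<^sup>2 * ((\<gamma>0 / 32) / (2 * real CARD('n))) ^ (CARD('n) + 1) / (4 * M)"
  define \<delta> where "\<delta> = exp (- (max 0 (Mt * M / \<eta>) + 1)) / 4"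
  define \<gamma>1 where "\<gamma>1 = \<gamma>0 * \<delta> / 8"
  have d: "0 < \<delta>" "\<delta> \<le> 1/4" unfolding \<delta>_def by auto
  have "\<gamma>0 * \<delta> \<le> 1 * (1/4)" using d assms by (intro mult_mono) auto
  then have g1: "0 < \<gamma>1" "\<gamma>1 \<le> 1/2" using d assms unfolding \<gamma>1_def by (auto simp: mult.commute)
  have "\<forall>S :: 'n ppoint set.
       closed S \<and> parabolic_ADR M S \<and> corkscrew \<gamma>0 S \<and> parabolic_UR M Mt S
       \<longrightarrow> weak_ts_two_cube \<gamma>1 S"
  proof (intro allI impI)
    fix S :: "'n ppoint set"
    assume H: "closed S \<and> parabolic_ADR M S \<and> corkscrew \<gamma>0 S \<and> parabolic_UR M Mt S"
    show "weak_ts_two_cube \<gamma>1 S"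
      unfolding weak_ts_two_cube_def two_cube_def
    proof (intro ballI allI impI)
      fix p r assume p: "p \<in> S" and pr: "in_time_range S (snd p) \<and> 0 < r \<and> ennreal r < pdiam S"
      obtain U1 U2 where U: "U1 \<in> components (- S)" "U2 \<in> components (- S)" "U1 \<noteq> U2"
        using H p pr unfolding corkscrew_def two_cube_def by blast
      show "\<exists>\<rho> p1 p2. \<gamma>1 * r \<le> \<rho> \<and> \<rho> < r \<and> pcube \<rho> p1 \<subseteq> pcube r p \<and> pcube \<rho> p2 \<subseteq> pcube r p \<and>
           (True \<longrightarrow> snd p1 = snd p2) \<and>
           (\<exists>U1 U2. U1 \<in> components (- S) \<and> U2 \<in> components (- S) \<and> U1 \<noteq> U2 \<and>
              pcube \<rho> p1 \<inter> {q. in_time_range S (snd q)} \<subseteq> U1 \<and>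
              pcube \<rho> p2 \<inter> {q. in_time_range S (snd q)} \<subseteq> U2)"
      proof (cases "ereal (snd p - r\<^sup>2/2) \<le> T0 S")
        case True
        define c where "c = (fst p, snd p - 3 * r\<^sup>2 / 4)"
        have "pcube (r/2) c \<inter> {q. in_time_range S (snd q)} = {}"
        proof (rule no_range_below[OF True])
          show "\<forall>q\<in>pcube (r/2) c. snd q < snd p - r\<^sup>2/2"
          proof
            fix q assume "q \<in> pcube (r/2) c"
            then have "\<bar>snd c - snd q\<bar> < (r/2)\<^sup>2" by (simp add: pcube_iff)
            then have "- (snd c - snd q) < (r/2)\<^sup>2" using abs_less_iff by blast
            moreover have "(r/2)\<^sup>2 = r\<^sup>2 / 4" by (simp add: power_divide)
            ultimately show "snd q < snd p - r\<^sup>2/2" unfolding c_def by simp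
          qed
        qed
        then show ?thesis using pr g1 U by (intro trivial_case[where c=c]) (auto simp: c_def)
      next
        case F0: False
        show ?thesis
        proof (cases "T1 S \<le> ereal (snd p + r\<^sup>2/2)")
          case True
          define c where "c = (fst p, snd p + 3 * r\<^sup>2 / 4)"
          have "pcube (r/2) c \<inter> {q. in_time_range S (snd q)} = {}"
          proof (rule no_range_above[OF True])
            show "\<forall>q\<in>pcube (r/2) c. snd p + r\<^sup>2/2 < snd q"
            proof
              fix q assume "q \<in> pcube (r/2) c"
              then have "\<bar>snd c - snd q\<bar> < (r/2)\<^sup>2" by (simp add: pcube_iff)
              then have "snd c - snd q < (r/2)\<^sup>2" using abs_less_iff by blast
              moreover have "(r/2)\<^sup>2 = r\<^sup>2 / 4" by (simp add: power_divide)
              ultimately show "snd p + r\<^sup>2/2 < snd q" unfolding c_def by simp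
            qed
          qed
          then show ?thesis using pr g1 U by (intro trivial_case[where c=c]) (auto simp: c_def)
        next
          case F1: False
          have "\<exists>\<rho> p1 p2. \<gamma>1 * r \<le> \<rho> \<and> \<rho> < r \<and> pcube \<rho> p1 \<subseteq> pcube r p \<and> pcube \<rho> p2 \<subseteq> pcube r p \<and>
           snd p1 = snd p2 \<and>
           (\<exists>U1 U2. U1 \<in> components (- S) \<and> U2 \<in> components (- S) \<and> U1 \<noteq> U2 \<and>
              pcube \<rho> p1 \<inter> {q. in_time_range S (snd q)} \<subseteq> U1 \<and>
              pcube \<rho> p2 \<inter> {q. in_time_range S (snd q)} \<subseteq> U2)"
            unfolding \<gamma>1_def \<delta>_def \<eta>_def
            using caseC[of M \<gamma>0 S Mt p r] H assms p pr F0 F1 by (simp add: not_le)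
          then show ?thesis by simp
        qed
      qed
    qed
  qed
  moreover have "\<gamma>1 < 1" using g1 by simp
  ultimately show ?thesis using g1 by blast
qed


end
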